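(* Let $G(s)\in\mathbb{C}(s)^{n\times n}$ be a strictly proper complex rational transfer function of McMillan degree $\delta$ with $G(s)=G(s)^t$. Then: (1) $G(s)$ has a controllable and observable complex symmetric realization, i.e. there exist $A\in\mathbb{C}^{\delta\times\delta}$ with $A=A^t$, $B\in\mathbb{C}^{\delta\times n}$ and $C=B^t$ such that $G(s)=C(sI_\delta-A)^{-1}B$ and $(A,B,C)$ is controllable and observable; equivalently $(A,B,C)=(A^t,C^t,B^t)$. (2) If $(A_i,B_i,C_i)$, $i=1,2$, are two controllable and observable complex symmetric realizations of $G(s)$ (so $A_i=A_i^t$, $C_i=B_i^t$), then there exists a unique $S\in O(\delta,\mathbb{C})$ such that $(A_2,B_2,C_2)=(SA_1S^{-1},SB_1,C_1S^{-1})$.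
   Context: $O(\delta,\mathbb{C})=\{S\in\mathbb{C}^{\delta\times\delta}: SS^t=I_\delta\}$ is the complex orthogonal group. A realization of $G$ is a triple $(A,B,C)$ with $G(s)=C(sI-A)^{-1}B$; the McMillan degree is the state dimension of a controllable and observable (minimal) realization. *)

theory Defs
  imports "Jordan_Normal_Form.DL_Rank" "Jordan_Normal_Form.Gauss_Jordan_Elimination"
          "HOL-Computational_Algebra.Polynomial"
begin

definition minv :: "complex mat \<Rightarrow> complex mat" where
  "minv M = the (mat_inverse M)"

(* Functions agreeing cofinitely represent the same element of C(s)^(n x n). *)
definition strictly_proper_rational :: "nat \<Rightarrow> (complex \<Rightarrow> complex mat) \<Rightarrow> bool" where
  "strictly_proper_rational n G \<longleftrightarrow>
     (\<forall>s. G s \<in> carrier_mat n n) \<and>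
     (\<exists>P Q :: nat \<Rightarrow> nat \<Rightarrow> complex poly. \<forall>i<n. \<forall>j<n.
        Q i j \<noteq> 0 \<and> (P i j = 0 \<or> degree (P i j) < degree (Q i j)) \<and>
        (\<forall>\<^sub>F s in cofinite. G s $$ (i,j) = poly (P i j) s / poly (Q i j) s))"

definition is_realization ::
  "nat \<Rightarrow> (complex \<Rightarrow> complex mat) \<Rightarrow> nat \<Rightarrow> complex mat \<Rightarrow> complex mat \<Rightarrow> complex mat \<Rightarrow> bool" where
  "is_realization n G d A B C \<longleftrightarrow>
     A \<in> carrier_mat d d \<and> B \<in> carrier_mat d n \<and> C \<in> carrier_mat n d \<and>
     (\<forall>\<^sub>F s in cofinite. G s = C * minv (s \<cdot>\<^sub>m 1\<^sub>m d - A) * B)"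

(* Kalman controllability matrix [B, AB, ..., A^(d-1) B]  (d x d*m) *)
definition ctrb_mat :: "complex mat \<Rightarrow> complex mat \<Rightarrow> complex mat" where
  "ctrb_mat A B = (let d = dim_row A; m = dim_col B in
     mat d (d * m) (\<lambda>(i,j). ((A ^\<^sub>m (j div m)) * B) $$ (i, j mod m)))"

(* Kalman observability matrix [C; CA; ...; C A^(d-1)]  (d*p x d) *)
definition obsv_mat :: "complex mat \<Rightarrow> complex mat \<Rightarrow> complex mat" where
  "obsv_mat A C = (let d = dim_row A; p = dim_row C in
     mat (d * p) d (\<lambda>(i,j). (C * (A ^\<^sub>m (i div p))) $$ (i mod p, j)))"

definition controllable :: "complex mat \<Rightarrow> complex mat \<Rightarrow> bool" where
  "controllable A B \<longleftrightarrow> vec_space.rank (dim_row A) (ctrb_mat A B) = dim_row A"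

definition observable :: "complex mat \<Rightarrow> complex mat \<Rightarrow> bool" where
  "observable A C \<longleftrightarrow> vec_space.rank (dim_row A) (transpose_mat (obsv_mat A C)) = dim_row A"

definition mcmillan_degree :: "nat \<Rightarrow> (complex \<Rightarrow> complex mat) \<Rightarrow> nat \<Rightarrow> bool" where
  "mcmillan_degree n G \<delta> \<longleftrightarrow>
     (\<exists>A B C. is_realization n G \<delta> A B C \<and> controllable A B \<and> observable A C)"

definition orth_group :: "nat \<Rightarrow> complex mat set" where
  "orth_group d = {S \<in> carrier_mat d d. S * transpose_mat S = 1\<^sub>m d}"

end

theory Submission
  imports Defs "Jordan_Normal_Form.Char_Poly"
begin

lemma minv_props:
  fixes M :: "complex mat"
  assumes M: "M \<in> carrier_mat k k" and d: "det M \<noteq> 0"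
  shows "minv M \<in> carrier_mat k k" "M * minv M = 1\<^sub>m k" "minv M * M = 1\<^sub>m k"
proof -
  have U: "M \<in> Units (ring_mat TYPE(complex) k undefined)" by (rule det_non_zero_imp_unit[OF M d])
  obtain B where B: "mat_inverse M = Some B"
    using mat_inverse(1)[OF M, of undefined] U by (cases "mat_inverse M") auto
  from mat_inverse(2)[OF M B] B show "minv M \<in> carrier_mat k k" "M * minv M = 1\<^sub>m k" "minv M * M = 1\<^sub>m k"
    unfolding minv_def by auto
qed

lemma minv_unique:
  fixes M :: "complex mat"
  assumes M: "M \<in> carrier_mat k k" and N: "N \<in> carrier_mat k k" and MN: "M * N = 1\<^sub>m k"
  shows "minv M = N" "det M \<noteq> 0"
proof -
  from det_mult[OF M N, unfolded MN] show dM: "det M \<noteq> 0" by auto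
  note p = minv_props[OF M dM]
  have "minv M = minv M * (M * N)" using MN p(1) by simp
  also have "\<dots> = (minv M * M) * N" using p(1) M N by (simp add: assoc_mult_mat)
  also have "\<dots> = N" using p(3) N by simp
  finally show "minv M = N" .
qed


lemma (in vec_space) mat_vec_in_span_cols:
  assumes M: "M \<in> carrier_mat n m" and x: "x \<in> carrier_vec m"
  shows "M *\<^sub>v x \<in> span (set (cols M))"
proof -
  have sc: "set (cols M) \<subseteq> carrier_vec n" using M cols_dim by blast
  have "M *\<^sub>v x = mat_of_cols n (cols M) *\<^sub>v vec (length (cols M)) (\<lambda>i. x $ i)"
    using M x mat_of_cols_cols[of M] by (auto intro!: arg_cong2[where f="(*\<^sub>v)"])
  also have "\<dots> = lincomb_list (\<lambda>i. x $ i) (cols M)"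
    by (rule lincomb_list_as_mat_mult[symmetric]) (use sc in auto)
  also have "\<dots> \<in> span_list (cols M)" unfolding span_list_def by blast
  finally show ?thesis using span_list_as_span[OF sc] by simp
qed

lemma rank_right_inv:
  fixes M :: "complex mat"
  assumes M: "M \<in> carrier_mat d m" and r: "vec_space.rank d M = d"
  shows "\<exists>R \<in> carrier_mat m d. M * R = 1\<^sub>m d"
proof -
  interpret vec_space "TYPE(complex)" d .
  obtain S where S: "maximal S (\<lambda>T. T \<subseteq> set (cols M) \<and> lin_indpt T)"
    using maximal_exists[of "(\<lambda>T. T \<subseteq> set (cols M) \<and> lin_indpt T)" "card (set (cols M))" "{}"]
    by (meson List.finite_set card_mono empty_iff empty_subsetI finite_lin_indpt2 rev_finite_subset)
  have card: "card S = d" using rank_card_indpt[OF M S] r by simp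
  have Ssub: "S \<subseteq> set (cols M)" "lin_indpt S" using S unfolding maximal_def by auto
  have sc: "set (cols M) \<subseteq> carrier_vec d" using M cols_dim by blast
  have Scar: "S \<subseteq> carrier_vec d" using Ssub sc by auto
  have fS: "finite S" using Ssub(1) finite_subset by blast
  have "basis S"
    by (rule dim_li_is_basis) (use fS Scar Ssub card dim_is_n in auto)
  then have spanS: "span S = carrier_vec d" by (simp add: basis_def)
  have "span S \<subseteq> span (set (cols M))" by (rule span_is_monotone[OF Ssub(1)])
  with spanS have allin: "\<And>v. v \<in> carrier_vec d \<Longrightarrow> v \<in> span_list (cols M)"
    using span_list_as_span[OF sc] by auto
  have "\<forall>i<d. \<exists>x. x \<in> carrier_vec m \<and> M *\<^sub>v x = unit_vec d i"
  proof (intro allI impI)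
    fix i assume i: "i < d"
    from allin[of "unit_vec d i"] obtain c where c: "unit_vec d i = lincomb_list c (cols M)"
      unfolding span_list_def by auto
    also have "\<dots> = mat_of_cols d (cols M) *\<^sub>v vec (length (cols M)) c"
      by (rule lincomb_list_as_mat_mult) (use sc in auto)
    also have "\<dots> = M *\<^sub>v vec m c" using M mat_of_cols_cols[of M] by simp
    finally show "\<exists>x. x \<in> carrier_vec m \<and> M *\<^sub>v x = unit_vec d i"
      by (intro exI[of _ "vec m c"]) auto
  qed
  then obtain f where f: "\<And>i. i < d \<Longrightarrow> f i \<in> carrier_vec m \<and> M *\<^sub>v f i = unit_vec d i"
    by metis
  define R where "R = mat m d (\<lambda>(i,j). f j $ i)"
  have R: "R \<in> carrier_mat m d" unfolding R_def by simp
  have colR: "col R j = f j" if j: "j < d" for j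
  proof -
    have fj: "f j \<in> carrier_vec m" using f[OF j] by auto
    show ?thesis unfolding R_def using j fj by (auto intro!: eq_vecI)
  qed
  have "M * R = 1\<^sub>m d"
  proof (rule eq_matI)
    fix i j assume i: "i < dim_row (1\<^sub>m d)" and j: "j < dim_col (1\<^sub>m d)"
    then have "(M * R) $$ (i,j) = row M i \<bullet> col R j" using M R by simp
    also have "\<dots> = (M *\<^sub>v f j) $ i" using colR[of j] i j M by simp
    also have "\<dots> = 1\<^sub>m d $$ (i,j)" using f[of j] i j by simp
    finally show "(M * R) $$ (i,j) = 1\<^sub>m d $$ (i,j)" .
  qed (use M R in auto)
  with R show ?thesis by blast
qed

lemma right_inv_rank:
  fixes M :: "complex mat"
  assumes M: "M \<in> carrier_mat d m" and R: "R \<in> carrier_mat m d" and MR: "M * R = 1\<^sub>m d"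
  shows "vec_space.rank d M = d"
proof -
  interpret vec_space "TYPE(complex)" d .
  obtain S where S: "maximal S (\<lambda>T. T \<subseteq> set (cols M) \<and> lin_indpt T)"
    using maximal_exists[of "(\<lambda>T. T \<subseteq> set (cols M) \<and> lin_indpt T)" "card (set (cols M))" "{}"]
    by (meson List.finite_set card_mono empty_iff empty_subsetI finite_lin_indpt2 rev_finite_subset)
  have rk: "rank M = card S" using rank_card_indpt[OF M S] .
  have Ssub: "S \<subseteq> set (cols M)" "lin_indpt S" using S unfolding maximal_def by auto
  have sc: "set (cols M) \<subseteq> carrier_vec d" using M cols_dim by blast
  have Scar: "S \<subseteq> carrier_vec d" using Ssub sc by auto
  have fS: "finite S" using Ssub(1) finite_subset by blast
  have colsin: "set (cols M) \<subseteq> span S"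
  proof
    fix v assume v: "v \<in> set (cols M)"
    show "v \<in> span S"
    proof (cases "v \<in> S")
      case True then show ?thesis using Scar in_own_span by blast
    next
      case False
      have "\<not> lin_indpt (S \<union> {v})"
      proof
        assume li: "lin_indpt (S \<union> {v})"
        have "S \<union> {v} \<subseteq> set (cols M)" using v Ssub by auto
        with li S have "S \<union> {v} = S" unfolding maximal_def by blast
        with False show False by auto
      qed
      then show ?thesis using lin_dep_iff_in_span[OF Scar Ssub(2) _ False] v sc by auto
    qed
  qed
  have "carrier_vec d \<subseteq> span S"
  proof
    fix v :: "complex vec" assume v: "v \<in> carrier_vec d"
    have "v = M *\<^sub>v (R *\<^sub>v v)"
      using M R v MR by (simp add: assoc_mult_mat_vec[symmetric])
    moreover have "M *\<^sub>v (R *\<^sub>v v) \<in> span (set (cols M))"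
      by (rule mat_vec_in_span_cols[OF M]) (use R v in auto)
    moreover have "span (set (cols M)) \<subseteq> span S"
      using span_subsetI[OF Scar colsin] .
    ultimately show "v \<in> span S" by auto
  qed
  then have "span S = carrier_vec d" using span_closed[OF Scar] by auto
  then have "basis S" using Ssub Scar unfolding basis_def by auto
  then have "dim = card S" using dim_basis[OF fS] by simp
  then show ?thesis using rk dim_is_n by simp
qed


lemma pow_commute:
  fixes A X :: "complex mat"
  assumes A: "A \<in> carrier_mat n n" and X: "X \<in> carrier_mat n n" and c: "A * X = X * A"
  shows "A ^\<^sub>m k * X = X * A ^\<^sub>m k"
proof (induction k)
  case 0 then show ?case using A X by simp
next
  case (Suc k)
  have Ak: "A ^\<^sub>m k \<in> carrier_mat n n" using A by simp
  have "A ^\<^sub>m Suc k * X = A ^\<^sub>m k * (A * X)" using A X Ak by (simp add: assoc_mult_mat[of _ n n _ n _ n])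
  also have "\<dots> = (A ^\<^sub>m k * X) * A" using c assoc_mult_mat[OF Ak X A] by simp
  also have "\<dots> = X * A ^\<^sub>m Suc k" using Suc assoc_mult_mat[OF X Ak A] by simp
  finally show ?case .
qed

lemma lin_rel:
  fixes u :: "nat \<Rightarrow> complex vec"
  assumes rel: "\<forall>idx<d. (\<Sum>k\<in>K. \<alpha> k * (u k $ idx)) = 0"
    and u: "\<forall>k\<in>K. u k \<in> carrier_vec d" and z: "z \<in> carrier_vec d"
  shows "(\<Sum>k\<in>K. \<alpha> k * (z \<bullet> u k)) = 0"
proof -
  have "(\<Sum>k\<in>K. \<alpha> k * (z \<bullet> u k)) = (\<Sum>k\<in>K. \<Sum>idx<d. z $ idx * (\<alpha> k * u k $ idx))"
    using u unfolding scalar_prod_def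
    by (intro sum.cong refl) (auto simp: sum_distrib_left atLeast0LessThan ac_simps)
  also have "\<dots> = (\<Sum>idx<d. z $ idx * (\<Sum>k\<in>K. \<alpha> k * u k $ idx))"
    by (subst sum.swap) (simp add: sum_distrib_left)
  also have "\<dots> = 0" using rel by simp
  finally show ?thesis .
qed

lemma dependence:
  fixes u1 u2 :: "nat \<Rightarrow> complex vec"
  assumes u1: "\<forall>k. u1 k \<in> carrier_vec d1" and u2: "\<forall>k. u2 k \<in> carrier_vec d2"
  shows "\<exists>\<alpha> r. \<alpha> r \<noteq> 0 \<and> (\<forall>idx<d1. (\<Sum>k\<le>r. \<alpha> k * (u1 k $ idx)) = 0)
                      \<and> (\<forall>idx<d2. (\<Sum>k\<le>r. \<alpha> k * (u2 k $ idx)) = 0)"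
proof -
  define N where "N = Suc (d1 + d2)"
  define Mt :: "complex mat" where "Mt = mat N N (\<lambda>(i,k). if i < d1 then u1 k $ i
      else if i < d1 + d2 then u2 k $ (i - d1) else 0)"
  have Mt: "Mt \<in> carrier_mat N N" unfolding Mt_def by simp
  have MtT: "transpose_mat Mt \<in> carrier_mat N N" using Mt by simp
  have "transpose_mat Mt *\<^sub>v unit_vec N (d1 + d2) = 0\<^sub>v N"
  proof (rule eq_vecI)
    fix i assume i: "i < dim_vec (0\<^sub>v N)"
    have "(transpose_mat Mt *\<^sub>v unit_vec N (d1 + d2)) $ i = row (transpose_mat Mt) i \<bullet> unit_vec N (d1 + d2)"
      using i MtT by simp
    also have "\<dots> = row (transpose_mat Mt) i $ (d1 + d2)"
      using i MtT N_def by (simp add: scalar_prod_right_unit)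
    also have "\<dots> = 0" using i unfolding Mt_def N_def by simp
    finally show "(transpose_mat Mt *\<^sub>v unit_vec N (d1 + d2)) $ i = 0\<^sub>v N $ i" using i by simp
  qed (use Mt in simp)
  moreover have "(unit_vec N (d1 + d2) :: complex vec) \<noteq> 0\<^sub>v N"
  proof
    assume e: "(unit_vec N (d1 + d2) :: complex vec) = 0\<^sub>v N"
    have "(unit_vec N (d1 + d2) :: complex vec) $ (d1 + d2) = 1" unfolding N_def by simp
    moreover have "0\<^sub>v N $ (d1 + d2) = (0::complex)" unfolding N_def by simp
    ultimately show False unfolding e by simp
  qed
  moreover have "(unit_vec N (d1 + d2) :: complex vec) \<in> carrier_vec N" by simp
  ultimately have "det (transpose_mat Mt) = 0"
    using det_0_iff_vec_prod_zero[OF MtT] by blast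
  then have "det Mt = 0" using det_transpose[OF Mt] by simp
  then obtain v where v: "v \<in> carrier_vec N" "v \<noteq> 0\<^sub>v N" "Mt *\<^sub>v v = 0\<^sub>v N"
    using det_0_iff_vec_prod_zero[OF Mt] by auto
  define J where "J = {k. k < N \<and> v $ k \<noteq> 0}"
  have "J \<noteq> {}"
  proof
    assume "J = {}"
    then have "v = 0\<^sub>v N" using v(1) unfolding J_def by (auto intro!: eq_vecI)
    with v(2) show False by simp
  qed
  moreover have fJ: "finite J" unfolding J_def by simp
  ultimately have rJ: "Max J \<in> J" by simp
  define r where "r = Max J"
  define \<alpha> where "\<alpha> = (\<lambda>k. if k < N then v $ k else 0)"
  have rN: "r < N" "v $ r \<noteq> 0" using rJ unfolding r_def J_def by auto
  have zero_above: "\<alpha> k = 0" if "r < k" for k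
  proof (cases "k < N")
    case True
    with that have "k \<notin> J" using Max_ge[OF fJ] unfolding r_def by fastforce
    with True show ?thesis unfolding J_def \<alpha>_def by auto
  qed (simp add: \<alpha>_def)
  have sums: "(\<Sum>k\<le>r. \<alpha> k * Mt $$ (i,k)) = 0" if i: "i < N" for i
  proof -
    have "(\<Sum>k\<le>r. \<alpha> k * Mt $$ (i,k)) = (\<Sum>k<N. \<alpha> k * Mt $$ (i,k))"
      by (rule sum.mono_neutral_left) (use rN zero_above in auto)
    also have "\<dots> = (Mt *\<^sub>v v) $ i"
      using i v(1) Mt unfolding \<alpha>_def
      by (simp add: scalar_prod_def row_def atLeast0LessThan ac_simps)
    also have "\<dots> = 0" using v(3) i by simp
    finally show ?thesis .
  qed
  show ?thesis
  proof (intro exI conjI allI impI)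
    show "\<alpha> r \<noteq> 0" using rN unfolding \<alpha>_def by simp
  next
    fix idx assume idx: "idx < d1"
    have "(\<Sum>k\<le>r. \<alpha> k * (u1 k $ idx)) = (\<Sum>k\<le>r. \<alpha> k * Mt $$ (idx,k))"
      using idx rN unfolding Mt_def N_def by (intro sum.cong refl) auto
    then show "(\<Sum>k\<le>r. \<alpha> k * (u1 k $ idx)) = 0" using sums[of idx] idx N_def by simp
  next
    fix idx assume idx: "idx < d2"
    have "(\<Sum>k\<le>r. \<alpha> k * (u2 k $ idx)) = (\<Sum>k\<le>r. \<alpha> k * Mt $$ (d1 + idx,k))"
      using idx rN unfolding Mt_def N_def by (intro sum.cong refl) auto
    then show "(\<Sum>k\<le>r. \<alpha> k * (u2 k $ idx)) = 0" using sums[of "d1 + idx"] idx N_def by simp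
  qed
qed


lemma pow_mat_add:
  fixes A :: "complex mat"
  assumes A: "A \<in> carrier_mat n n"
  shows "A ^\<^sub>m (a + b) = A ^\<^sub>m a * A ^\<^sub>m b"
proof (induction b)
  case 0 then show ?case using A by simp
next
  case (Suc b)
  have "A ^\<^sub>m (a + Suc b) = A ^\<^sub>m (a + b) * A" by simp
  also have "\<dots> = A ^\<^sub>m a * A ^\<^sub>m b * A" using Suc by simp
  also have "\<dots> = A ^\<^sub>m a * A ^\<^sub>m Suc b"
    using assoc_mult_mat[OF pow_carrier_mat[OF A] pow_carrier_mat[OF A] A] by simp
  finally show ?case .
qed

lemma smult_mat_vec_assoc:
  fixes A :: "complex mat"
  assumes "dim_vec v = dim_col A"
  shows "(k \<cdot>\<^sub>m A) *\<^sub>v v = k \<cdot>\<^sub>v (A *\<^sub>v v)"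
  by (intro eq_vecI) (use assms in \<open>auto simp: scalar_prod_def sum_distrib_left ac_simps intro!: sum.cong\<close>)

fun Pk :: "(nat \<Rightarrow> complex) \<Rightarrow> nat \<Rightarrow> complex poly" where
  "Pk m 0 = 0"
| "Pk m (Suc k) = pCons (m k) (Pk m k)"

lemma coeff_Pk: "coeff (Pk m k) e = (if e < k then m (k - 1 - e) else 0)"
proof (induction k arbitrary: e)
  case 0 then show ?case by simp
next
  case (Suc k) then show ?case by (cases e) auto
qed

lemma inverse_facts:
  fixes A X :: "complex mat"
  assumes A: "A \<in> carrier_mat d d" and X: "X \<in> carrier_mat d d"
    and l: "(s \<cdot>\<^sub>m 1\<^sub>m d - A) * X = 1\<^sub>m d" and r: "X * (s \<cdot>\<^sub>m 1\<^sub>m d - A) = 1\<^sub>m d"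
  shows "A * X = X * A" "s \<cdot>\<^sub>m X = 1\<^sub>m d + A * X"
proof -
  have l': "(s \<cdot>\<^sub>m 1\<^sub>m d - A) * X = s \<cdot>\<^sub>m X - A * X"
    using A X by (simp add: minus_mult_distrib_mat[of _ d d] mult_smult_assoc_mat[of _ d d _ d])
  have r': "X * (s \<cdot>\<^sub>m 1\<^sub>m d - A) = s \<cdot>\<^sub>m X - X * A"
  proof -
    have "X * (s \<cdot>\<^sub>m 1\<^sub>m d - A) = X * (s \<cdot>\<^sub>m 1\<^sub>m d) - X * A"
      by (rule mult_minus_distrib_mat[OF X _ A]) simp
    also have "X * (s \<cdot>\<^sub>m 1\<^sub>m d) = s \<cdot>\<^sub>m (X * 1\<^sub>m d)"
      by (rule mult_smult_distrib[OF X one_carrier_mat])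
    finally show ?thesis using X by simp
  qed
  show "A * X = X * A"
  proof (rule eq_matI)
    fix i j assume i: "i < dim_row (X * A)" and j: "j < dim_col (X * A)"
    have "(s \<cdot>\<^sub>m X - A * X) $$ (i,j) = (s \<cdot>\<^sub>m X - X * A) $$ (i,j)" using l r l' r' by simp
    then show "(A * X) $$ (i,j) = (X * A) $$ (i,j)" using i j A X by simp
  qed (use A X in auto)
  show "s \<cdot>\<^sub>m X = 1\<^sub>m d + A * X"
  proof (rule eq_matI)
    fix i j assume i: "i < dim_row (1\<^sub>m d + A * X)" and j: "j < dim_col (1\<^sub>m d + A * X)"
    have "(s \<cdot>\<^sub>m X - A * X) $$ (i,j) = 1\<^sub>m d $$ (i,j)" using l l' by simp
    then show "(s \<cdot>\<^sub>m X) $$ (i,j) = (1\<^sub>m d + A * X) $$ (i,j)" using i j A X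
      by (simp add: algebra_simps)
  qed (use A X in auto)
qed

lemma markov_key:
  fixes A1 A2 :: "complex mat" and v1 w1 v2 w2 :: "complex vec" and S :: "complex set"
  assumes A1: "A1 \<in> carrier_mat d1 d1" and A2: "A2 \<in> carrier_mat d2 d2"
    and v1: "v1 \<in> carrier_vec d1" and w1: "w1 \<in> carrier_vec d1"
    and v2: "v2 \<in> carrier_vec d2" and w2: "w2 \<in> carrier_vec d2"
    and S: "infinite S"
    and hX: "\<And>s. s \<in> S \<Longrightarrow> \<exists>X1 X2. X1 \<in> carrier_mat d1 d1 \<and> X2 \<in> carrier_mat d2 d2 \<and>
       (s \<cdot>\<^sub>m 1\<^sub>m d1 - A1) * X1 = 1\<^sub>m d1 \<and> X1 * (s \<cdot>\<^sub>m 1\<^sub>m d1 - A1) = 1\<^sub>m d1 \<and>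
       (s \<cdot>\<^sub>m 1\<^sub>m d2 - A2) * X2 = 1\<^sub>m d2 \<and> X2 * (s \<cdot>\<^sub>m 1\<^sub>m d2 - A2) = 1\<^sub>m d2 \<and>
       w1 \<bullet> (X1 *\<^sub>v v1) = w2 \<bullet> (X2 *\<^sub>v v2)"
  shows "w1 \<bullet> (A1 ^\<^sub>m t *\<^sub>v v1) = w2 \<bullet> (A2 ^\<^sub>m t *\<^sub>v v2)"
proof -
  define u1 where "u1 k = A1 ^\<^sub>m k *\<^sub>v v1" for k
  define u2 where "u2 k = A2 ^\<^sub>m k *\<^sub>v v2" for k
  have u1c: "\<forall>k. u1 k \<in> carrier_vec d1" unfolding u1_def
    using A1 v1 mult_mat_vec_carrier[OF pow_carrier_mat[OF A1]] by blast
  have u2c: "\<forall>k. u2 k \<in> carrier_vec d2" unfolding u2_def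
    using A2 v2 mult_mat_vec_carrier[OF pow_carrier_mat[OF A2]] by blast
  obtain \<alpha> r where ar: "\<alpha> r \<noteq> 0"
    and rel1: "\<forall>idx<d1. (\<Sum>k\<le>r. \<alpha> k * (u1 k $ idx)) = 0"
    and rel2: "\<forall>idx<d2. (\<Sum>k\<le>r. \<alpha> k * (u2 k $ idx)) = 0"
    using dependence[OF u1c u2c] by blast
  define m where "m t = w1 \<bullet> (A1 ^\<^sub>m t *\<^sub>v v1) - w2 \<bullet> (A2 ^\<^sub>m t *\<^sub>v v2)" for t
  have rel_m: "(\<Sum>k\<le>r. \<alpha> k * m (k + i)) = 0" for i
  proof -
    have e1: "w1 \<bullet> (A1 ^\<^sub>m (k+i) *\<^sub>v v1) = (transpose_mat (A1 ^\<^sub>m i) *\<^sub>v w1) \<bullet> u1 k" for k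
    proof -
      have "A1 ^\<^sub>m (k+i) *\<^sub>v v1 = A1 ^\<^sub>m i *\<^sub>v u1 k"
        unfolding u1_def using pow_mat_add[OF A1, of i k] A1 v1
        by (simp add: add.commute assoc_mult_mat_vec[OF pow_carrier_mat[OF A1] pow_carrier_mat[OF A1]])
      then show ?thesis
        using transpose_vec_mult_scalar[OF pow_carrier_mat[OF A1] _ w1, of "u1 k" i] u1c by simp
    qed
    have e2: "w2 \<bullet> (A2 ^\<^sub>m (k+i) *\<^sub>v v2) = (transpose_mat (A2 ^\<^sub>m i) *\<^sub>v w2) \<bullet> u2 k" for k
    proof -
      have "A2 ^\<^sub>m (k+i) *\<^sub>v v2 = A2 ^\<^sub>m i *\<^sub>v u2 k"
        unfolding u2_def using pow_mat_add[OF A2, of i k] A2 v2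
        by (simp add: add.commute assoc_mult_mat_vec[OF pow_carrier_mat[OF A2] pow_carrier_mat[OF A2]])
      then show ?thesis
        using transpose_vec_mult_scalar[OF pow_carrier_mat[OF A2] _ w2, of "u2 k" i] u2c by simp
    qed
    have z1: "transpose_mat (A1 ^\<^sub>m i) *\<^sub>v w1 \<in> carrier_vec d1" using A1 w1 unfolding carrier_vec_def by simp
    have z2: "transpose_mat (A2 ^\<^sub>m i) *\<^sub>v w2 \<in> carrier_vec d2" using A2 w2 unfolding carrier_vec_def by simp
    have "(\<Sum>k\<le>r. \<alpha> k * m (k + i)) =
      (\<Sum>k\<le>r. \<alpha> k * ((transpose_mat (A1 ^\<^sub>m i) *\<^sub>v w1) \<bullet> u1 k)) -
      (\<Sum>k\<le>r. \<alpha> k * ((transpose_mat (A2 ^\<^sub>m i) *\<^sub>v w2) \<bullet> u2 k))"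
      unfolding m_def e1 e2 by (simp add: sum_subtractf right_diff_distrib)
    also have "\<dots> = 0"
      using lin_rel[OF rel1 _ z1] lin_rel[OF rel2 _ z2] u1c u2c by simp
    finally show ?thesis .
  qed
  define Q where "Q = (\<Sum>k\<le>r. Polynomial.smult (\<alpha> k) (Pk m k))"
  have rel_P: "poly Q s = 0" if s: "s \<in> S" for s
  proof -
    obtain X1 X2 where X1: "X1 \<in> carrier_mat d1 d1" and X2: "X2 \<in> carrier_mat d2 d2"
      and l1: "(s \<cdot>\<^sub>m 1\<^sub>m d1 - A1) * X1 = 1\<^sub>m d1" and r1: "X1 * (s \<cdot>\<^sub>m 1\<^sub>m d1 - A1) = 1\<^sub>m d1"
      and l2: "(s \<cdot>\<^sub>m 1\<^sub>m d2 - A2) * X2 = 1\<^sub>m d2" and r2: "X2 * (s \<cdot>\<^sub>m 1\<^sub>m d2 - A2) = 1\<^sub>m d2"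
      and g0: "w1 \<bullet> (X1 *\<^sub>v v1) = w2 \<bullet> (X2 *\<^sub>v v2)"
      using hX[OF s] by blast
    note f1 = inverse_facts[OF A1 X1 l1 r1]
    note f2 = inverse_facts[OF A2 X2 l2 r2]
    define \<gamma> where "\<gamma> k = w1 \<bullet> (A1 ^\<^sub>m k *\<^sub>v (X1 *\<^sub>v v1)) - w2 \<bullet> (A2 ^\<^sub>m k *\<^sub>v (X2 *\<^sub>v v2))" for k
    have g0': "\<gamma> 0 = 0" unfolding \<gamma>_def using g0 X1 X2 v1 v2 A1 A2 by simp
    have step1: "s * (w1 \<bullet> (A1 ^\<^sub>m k *\<^sub>v (X1 *\<^sub>v v1))) =
        w1 \<bullet> (A1 ^\<^sub>m k *\<^sub>v v1) + w1 \<bullet> (A1 ^\<^sub>m Suc k *\<^sub>v (X1 *\<^sub>v v1))" for k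
    proof -
      have "s \<cdot>\<^sub>v (X1 *\<^sub>v v1) = (s \<cdot>\<^sub>m X1) *\<^sub>v v1" using X1 v1 by (simp add: smult_mat_vec_assoc)
      also have "\<dots> = v1 + A1 *\<^sub>v (X1 *\<^sub>v v1)" unfolding f1(2)
        using A1 X1 v1 by (simp add: add_mult_distrib_mat_vec[of _ d1 d1])
      finally have xe: "s \<cdot>\<^sub>v (X1 *\<^sub>v v1) = v1 + A1 *\<^sub>v (X1 *\<^sub>v v1)" .
      have "s * (w1 \<bullet> (A1 ^\<^sub>m k *\<^sub>v (X1 *\<^sub>v v1))) = w1 \<bullet> (A1 ^\<^sub>m k *\<^sub>v (s \<cdot>\<^sub>v (X1 *\<^sub>v v1)))"
        using A1 X1 v1 w1 by (simp add: mult_mat_vec[of _ d1 d1])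
      also have "\<dots> = w1 \<bullet> (A1 ^\<^sub>m k *\<^sub>v v1 + A1 ^\<^sub>m k *\<^sub>v (A1 *\<^sub>v (X1 *\<^sub>v v1)))"
        unfolding xe using A1 X1 v1 by (simp add: mult_add_distrib_mat_vec[of _ d1 d1])
      also have "\<dots> = w1 \<bullet> (A1 ^\<^sub>m k *\<^sub>v v1) + w1 \<bullet> (A1 ^\<^sub>m k *\<^sub>v (A1 *\<^sub>v (X1 *\<^sub>v v1)))"
        by (rule scalar_prod_add_distrib[OF w1]) (use A1 X1 v1 in \<open>auto intro!: mult_mat_vec_carrier[of _ d1 d1]\<close>)
      also have "A1 ^\<^sub>m k *\<^sub>v (A1 *\<^sub>v (X1 *\<^sub>v v1)) = A1 ^\<^sub>m Suc k *\<^sub>v (X1 *\<^sub>v v1)"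
        using A1 X1 v1 by (simp add: assoc_mult_mat_vec[of _ d1 d1 _ d1])
      finally show ?thesis .
    qed
    have step2: "s * (w2 \<bullet> (A2 ^\<^sub>m k *\<^sub>v (X2 *\<^sub>v v2))) =
        w2 \<bullet> (A2 ^\<^sub>m k *\<^sub>v v2) + w2 \<bullet> (A2 ^\<^sub>m Suc k *\<^sub>v (X2 *\<^sub>v v2))" for k
    proof -
      have "s \<cdot>\<^sub>v (X2 *\<^sub>v v2) = (s \<cdot>\<^sub>m X2) *\<^sub>v v2" using X2 v2 by (simp add: smult_mat_vec_assoc)
      also have "\<dots> = v2 + A2 *\<^sub>v (X2 *\<^sub>v v2)" unfolding f2(2)
        using A2 X2 v2 by (simp add: add_mult_distrib_mat_vec[of _ d2 d2])
      finally have xe: "s \<cdot>\<^sub>v (X2 *\<^sub>v v2) = v2 + A2 *\<^sub>v (X2 *\<^sub>v v2)" .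
      have "s * (w2 \<bullet> (A2 ^\<^sub>m k *\<^sub>v (X2 *\<^sub>v v2))) = w2 \<bullet> (A2 ^\<^sub>m k *\<^sub>v (s \<cdot>\<^sub>v (X2 *\<^sub>v v2)))"
        using A2 X2 v2 w2 by (simp add: mult_mat_vec[of _ d2 d2])
      also have "\<dots> = w2 \<bullet> (A2 ^\<^sub>m k *\<^sub>v v2 + A2 ^\<^sub>m k *\<^sub>v (A2 *\<^sub>v (X2 *\<^sub>v v2)))"
        unfolding xe using A2 X2 v2 by (simp add: mult_add_distrib_mat_vec[of _ d2 d2])
      also have "\<dots> = w2 \<bullet> (A2 ^\<^sub>m k *\<^sub>v v2) + w2 \<bullet> (A2 ^\<^sub>m k *\<^sub>v (A2 *\<^sub>v (X2 *\<^sub>v v2)))"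
        by (rule scalar_prod_add_distrib[OF w2]) (use A2 X2 v2 in \<open>auto intro!: mult_mat_vec_carrier[of _ d2 d2]\<close>)
      also have "A2 ^\<^sub>m k *\<^sub>v (A2 *\<^sub>v (X2 *\<^sub>v v2)) = A2 ^\<^sub>m Suc k *\<^sub>v (X2 *\<^sub>v v2)"
        using A2 X2 v2 by (simp add: assoc_mult_mat_vec[of _ d2 d2 _ d2])
      finally show ?thesis .
    qed
    have grec: "s * \<gamma> k = m k + \<gamma> (Suc k)" for k
      unfolding \<gamma>_def m_def using step1[of k] step2[of k] by (simp add: right_diff_distrib)
    have gP: "poly (Pk m k) s = - \<gamma> k" for k
    proof (induction k)
      case 0 then show ?case using g0' by simp
    next
      case (Suc k) then show ?case using grec[of k] by simp
    qed
    have grel: "(\<Sum>k\<le>r. \<alpha> k * \<gamma> k) = 0"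
    proof -
      have c1: "A1 ^\<^sub>m k *\<^sub>v (X1 *\<^sub>v v1) = X1 *\<^sub>v u1 k" for k
        unfolding u1_def using pow_commute[OF A1 X1 f1(1), of k] A1 X1 v1
        by (simp add: assoc_mult_mat_vec[symmetric, of _ d1 d1 _ d1])
      have c2: "A2 ^\<^sub>m k *\<^sub>v (X2 *\<^sub>v v2) = X2 *\<^sub>v u2 k" for k
        unfolding u2_def using pow_commute[OF A2 X2 f2(1), of k] A2 X2 v2
        by (simp add: assoc_mult_mat_vec[symmetric, of _ d2 d2 _ d2])
      have e1: "w1 \<bullet> (X1 *\<^sub>v u1 k) = (transpose_mat X1 *\<^sub>v w1) \<bullet> u1 k" for k
        using transpose_vec_mult_scalar[OF X1 _ w1, of "u1 k"] u1c by simp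
      have e2: "w2 \<bullet> (X2 *\<^sub>v u2 k) = (transpose_mat X2 *\<^sub>v w2) \<bullet> u2 k" for k
        using transpose_vec_mult_scalar[OF X2 _ w2, of "u2 k"] u2c by simp
      have z1: "transpose_mat X1 *\<^sub>v w1 \<in> carrier_vec d1" using X1 w1 unfolding carrier_vec_def by simp
      have z2: "transpose_mat X2 *\<^sub>v w2 \<in> carrier_vec d2" using X2 w2 unfolding carrier_vec_def by simp
      have "(\<Sum>k\<le>r. \<alpha> k * \<gamma> k) =
        (\<Sum>k\<le>r. \<alpha> k * ((transpose_mat X1 *\<^sub>v w1) \<bullet> u1 k)) -
        (\<Sum>k\<le>r. \<alpha> k * ((transpose_mat X2 *\<^sub>v w2) \<bullet> u2 k))"
        unfolding \<gamma>_def c1 c2 e1 e2 by (simp add: sum_subtractf right_diff_distrib)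
      also have "\<dots> = 0"
        using lin_rel[OF rel1 _ z1] lin_rel[OF rel2 _ z2] u1c u2c by simp
      finally show ?thesis .
    qed
    have "poly Q s = (\<Sum>k\<le>r. \<alpha> k * poly (Pk m k) s)" unfolding Q_def by (simp add: poly_sum)
    also have "\<dots> = - (\<Sum>k\<le>r. \<alpha> k * \<gamma> k)" unfolding gP by (simp add: sum_negf)
    finally show ?thesis using grel by simp
  qed
  have Q0: "Q = 0"
  proof (rule ccontr)
    assume "Q \<noteq> 0"
    then have "finite {x. poly Q x = 0}" by (rule poly_roots_finite)
    moreover have "S \<subseteq> {x. poly Q x = 0}" using rel_P by auto
    ultimately show False using S finite_subset by blast
  qed
  have coeffs: "(\<Sum>k\<le>r. \<alpha> k * (if e < k then m (k - 1 - e) else 0)) = 0" for e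
  proof -
    have "coeff Q e = 0" using Q0 by simp
    then show ?thesis unfolding Q_def coeff_sum by (simp add: coeff_Pk)
  qed
  have split: "\<alpha> r * f r = 0" if "(\<Sum>k\<le>r. \<alpha> k * f k) = 0" "\<And>k. k < r \<Longrightarrow> f k = 0" for f
  proof -
    have "(\<Sum>k\<le>r. \<alpha> k * f k) = (\<Sum>k<r. \<alpha> k * f k) + \<alpha> r * f r"
      by (simp add: lessThan_Suc_atMost[symmetric])
    also have "(\<Sum>k<r. \<alpha> k * f k) = 0" using that(2) by simp
    finally show ?thesis using that(1) by simp
  qed
  have mz: "m t = 0" for t
  proof (induction t rule: less_induct)
    case (less t)
    show ?case
    proof (cases "t < r")
      case True
      let ?e = "r - 1 - t"
      let ?f = "\<lambda>k. if ?e < k then m (k - 1 - ?e) else 0"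
      have "\<alpha> r * ?f r = 0"
        by (rule split[of ?f]) (use coeffs[of ?e] True less in auto)
      then show ?thesis using True ar by simp
    next
      case False
      let ?f = "\<lambda>k. m (k + (t - r))"
      have "\<alpha> r * ?f r = 0"
        by (rule split[of ?f]) (use rel_m[of "t - r"] False less in auto)
      then show ?thesis using False ar by simp
    qed
  qed
  then show ?thesis using mz[of t] unfolding m_def by simp
qed


lemma ctrb_carrier:
  assumes A: "A \<in> carrier_mat d d" and B: "B \<in> carrier_mat d n"
  shows "ctrb_mat A B \<in> carrier_mat d (d * n)"
  using A B unfolding ctrb_mat_def Let_def by simp

lemma col_ctrb:
  fixes A B :: "complex mat"
  assumes A: "A \<in> carrier_mat d d" and B: "B \<in> carrier_mat d n" and j: "j < d * n"
  shows "col (ctrb_mat A B) j = col (A ^\<^sub>m (j div n) * B) (j mod n)"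
proof -
  have n: "0 < n" using j by (cases n) auto
  have jm: "j mod n < n" using n by simp
  have dA: "dim_row A = d" "dim_col A = d" using A by auto
  show ?thesis using A B j jm dA unfolding ctrb_mat_def Let_def by (auto intro!: eq_vecI)
qed

lemma obsv_carrier:
  assumes A: "A \<in> carrier_mat d d" and C: "C \<in> carrier_mat n d"
  shows "obsv_mat A C \<in> carrier_mat (d * n) d"
  using A C unfolding obsv_mat_def Let_def by simp

lemma row_obsv:
  fixes A C :: "complex mat"
  assumes A: "A \<in> carrier_mat d d" and C: "C \<in> carrier_mat n d" and i: "i < d * n"
  shows "row (obsv_mat A C) i = row (C * A ^\<^sub>m (i div n)) (i mod n)"
proof -
  have n: "0 < n" using i by (cases n) auto
  have im: "i mod n < n" using n by simp
  have CA: "C * A ^\<^sub>m (i div n) \<in> carrier_mat n d" using mult_carrier_mat[OF C pow_carrier_mat[OF A]] .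
  show ?thesis
  proof (rule eq_vecI)
    fix ia assume "ia < dim_vec (row (C * A ^\<^sub>m (i div n)) (i mod n))"
    then have ia: "ia < d" using CA carrier_matD[OF A] by (simp split: if_splits)
    show "row (obsv_mat A C) i $ ia = row (C * A ^\<^sub>m (i div n)) (i mod n) $ ia"
      using ia i im CA A C unfolding obsv_mat_def Let_def row_def by simp
  qed (use A C CA in \<open>simp add: obsv_mat_def Let_def\<close>)
qed

lemma hankel_entry:
  fixes A B C M :: "complex mat"
  assumes A: "A \<in> carrier_mat d d" and B: "B \<in> carrier_mat d n" and C: "C \<in> carrier_mat n d"
    and M: "M \<in> carrier_mat d d" and i: "i < d * n" and j: "j < d * n"
  shows "(obsv_mat A C * M * ctrb_mat A B) $$ (i,j) =
         (C * A ^\<^sub>m (i div n) * M * (A ^\<^sub>m (j div n) * B)) $$ (i mod n, j mod n)"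
proof -
  have n: "0 < n" using i by (cases n) auto
  have im: "i mod n < n" and jm: "j mod n < n" using n by auto
  note O = obsv_carrier[OF A C] and K = ctrb_carrier[OF A B]
  have CA: "C * A ^\<^sub>m (i div n) \<in> carrier_mat n d" using mult_carrier_mat[OF C pow_carrier_mat[OF A]] .
  have AB: "A ^\<^sub>m (j div n) * B \<in> carrier_mat d n" using mult_carrier_mat[OF pow_carrier_mat[OF A] B] .
  have OM: "obsv_mat A C * M \<in> carrier_mat (d * n) d" using mult_carrier_mat[OF O M] .
  have "(obsv_mat A C * M * ctrb_mat A B) $$ (i,j) = row (obsv_mat A C * M) i \<bullet> col (ctrb_mat A B) j"
    by (rule index_mult_mat(1)) (use OM K i j in auto)
  also have "row (obsv_mat A C * M) i = row (C * A ^\<^sub>m (i div n) * M) (i mod n)"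
    using row_mult[OF O M i] row_mult[OF CA M im] row_obsv[OF A C i] by simp
  also have "col (ctrb_mat A B) j = col (A ^\<^sub>m (j div n) * B) (j mod n)" using col_ctrb[OF A B j] .
  also have "row (C * A ^\<^sub>m (i div n) * M) (i mod n) \<bullet> col (A ^\<^sub>m (j div n) * B) (j mod n)
     = (C * A ^\<^sub>m (i div n) * M * (A ^\<^sub>m (j div n) * B)) $$ (i mod n, j mod n)"
    by (rule index_mult_mat(1)[symmetric]) (use CA M AB im jm in auto)
  finally show ?thesis .
qed

lemma entry_CXB:
  fixes C X B :: "complex mat"
  assumes C: "C \<in> carrier_mat n d" and X: "X \<in> carrier_mat d d" and B: "B \<in> carrier_mat d n"
    and a: "a < n" and b: "b < n"
  shows "(C * X * B) $$ (a,b) = row C a \<bullet> (X *\<^sub>v col B b)"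
proof -
  have "C * X * B = C * (X * B)" using assoc_mult_mat[OF C X B] .
  moreover have "(C * (X * B)) $$ (a,b) = row C a \<bullet> col (X * B) b"
    by (rule index_mult_mat(1)) (use C X B a b in auto)
  moreover have "col (X * B) b = X *\<^sub>v col B b" by (rule col_mult2[OF X B b])
  ultimately show ?thesis by simp
qed

lemma det_char_finite:
  fixes A :: "complex mat"
  assumes A: "A \<in> carrier_mat d d"
  shows "finite {s. det (s \<cdot>\<^sub>m 1\<^sub>m d - A) = 0}"
proof -
  have e: "det (s \<cdot>\<^sub>m 1\<^sub>m d - A) = poly (char_poly A) s" for s
  proof -
    have "s \<cdot>\<^sub>m 1\<^sub>m d - A = - char_matrix A s"
      using A unfolding char_matrix_def by (auto intro!: eq_matI)
    then show ?thesis using char_poly_matrix[OF A, of s] by simp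
  qed
  have "char_poly A \<noteq> 0" using degree_monic_char_poly[OF A] by auto
  from poly_roots_finite[OF this] show ?thesis unfolding e .
qed

lemma realization_inv:
  fixes A :: "complex mat"
  assumes A: "A \<in> carrier_mat d d" and s: "det (s \<cdot>\<^sub>m 1\<^sub>m d - A) \<noteq> 0"
  shows "minv (s \<cdot>\<^sub>m 1\<^sub>m d - A) \<in> carrier_mat d d"
    "(s \<cdot>\<^sub>m 1\<^sub>m d - A) * minv (s \<cdot>\<^sub>m 1\<^sub>m d - A) = 1\<^sub>m d"
    "minv (s \<cdot>\<^sub>m 1\<^sub>m d - A) * (s \<cdot>\<^sub>m 1\<^sub>m d - A) = 1\<^sub>m d"
proof -
  have c: "s \<cdot>\<^sub>m 1\<^sub>m d - A \<in> carrier_mat d d" using A by (intro minus_carrier_mat) auto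
  from minv_props[OF c s] show "minv (s \<cdot>\<^sub>m 1\<^sub>m d - A) \<in> carrier_mat d d"
    "(s \<cdot>\<^sub>m 1\<^sub>m d - A) * minv (s \<cdot>\<^sub>m 1\<^sub>m d - A) = 1\<^sub>m d"
    "minv (s \<cdot>\<^sub>m 1\<^sub>m d - A) * (s \<cdot>\<^sub>m 1\<^sub>m d - A) = 1\<^sub>m d" by auto
qed

lemma markov_eq:
  fixes A1 B1 C1 A2 B2 C2 :: "complex mat"
  assumes R1: "is_realization n G d A1 B1 C1" and R2: "is_realization n G d A2 B2 C2"
  shows "C1 * A1 ^\<^sub>m k * B1 = C2 * A2 ^\<^sub>m k * B2"
proof -
  from R1 have A1: "A1 \<in> carrier_mat d d" and B1: "B1 \<in> carrier_mat d n" and C1: "C1 \<in> carrier_mat n d"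
    and G1: "\<forall>\<^sub>F s in cofinite. G s = C1 * minv (s \<cdot>\<^sub>m 1\<^sub>m d - A1) * B1"
    unfolding is_realization_def by auto
  from R2 have A2: "A2 \<in> carrier_mat d d" and B2: "B2 \<in> carrier_mat d n" and C2: "C2 \<in> carrier_mat n d"
    and G2: "\<forall>\<^sub>F s in cofinite. G s = C2 * minv (s \<cdot>\<^sub>m 1\<^sub>m d - A2) * B2"
    unfolding is_realization_def by auto
  define S where "S = {s. G s = C1 * minv (s \<cdot>\<^sub>m 1\<^sub>m d - A1) * B1 \<and>
     G s = C2 * minv (s \<cdot>\<^sub>m 1\<^sub>m d - A2) * B2 \<and>
     det (s \<cdot>\<^sub>m 1\<^sub>m d - A1) \<noteq> 0 \<and> det (s \<cdot>\<^sub>m 1\<^sub>m d - A2) \<noteq> 0}"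
  have "finite (UNIV - S)"
  proof -
    have "UNIV - S \<subseteq> {s. \<not> G s = C1 * minv (s \<cdot>\<^sub>m 1\<^sub>m d - A1) * B1} \<union>
       {s. \<not> G s = C2 * minv (s \<cdot>\<^sub>m 1\<^sub>m d - A2) * B2} \<union>
       {s. det (s \<cdot>\<^sub>m 1\<^sub>m d - A1) = 0} \<union> {s. det (s \<cdot>\<^sub>m 1\<^sub>m d - A2) = 0}"
      unfolding S_def by auto
    moreover have "finite \<dots>"
      using G1 G2 det_char_finite[OF A1] det_char_finite[OF A2] unfolding eventually_cofinite by auto
    ultimately show ?thesis using finite_subset by blast
  qed
  then have infS: "infinite S"
    using infinite_UNIV_char_0[where 'a=complex] by (metis Diff_infinite_finite finite_Diff2)
  show ?thesis
  proof (rule eq_matI)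
    fix a b assume a: "a < dim_row (C2 * A2 ^\<^sub>m k * B2)" and b: "b < dim_col (C2 * A2 ^\<^sub>m k * B2)"
    then have a: "a < n" and b: "b < n" using C2 B2 by auto
    have v1: "col B1 b \<in> carrier_vec d" using B1 b by simp
    have w1: "row C1 a \<in> carrier_vec d" using C1 a by simp
    have v2: "col B2 b \<in> carrier_vec d" using B2 b by simp
    have w2: "row C2 a \<in> carrier_vec d" using C2 a by simp
    have "row C1 a \<bullet> (A1 ^\<^sub>m k *\<^sub>v col B1 b) = row C2 a \<bullet> (A2 ^\<^sub>m k *\<^sub>v col B2 b)"
    proof (rule markov_key[OF A1 A2 v1 w1 v2 w2 infS])
      fix s assume s: "s \<in> S"
      let ?X1 = "minv (s \<cdot>\<^sub>m 1\<^sub>m d - A1)" and ?X2 = "minv (s \<cdot>\<^sub>m 1\<^sub>m d - A2)"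
      from s have d1: "det (s \<cdot>\<^sub>m 1\<^sub>m d - A1) \<noteq> 0" and d2: "det (s \<cdot>\<^sub>m 1\<^sub>m d - A2) \<noteq> 0"
        and g: "C1 * ?X1 * B1 = C2 * ?X2 * B2" unfolding S_def by auto
      note i1 = realization_inv[OF A1 d1] and i2 = realization_inv[OF A2 d2]
      have "row C1 a \<bullet> (?X1 *\<^sub>v col B1 b) = row C2 a \<bullet> (?X2 *\<^sub>v col B2 b)"
        using entry_CXB[OF C1 i1(1) B1 a b] entry_CXB[OF C2 i2(1) B2 a b] g by simp
      then show "\<exists>X1 X2. X1 \<in> carrier_mat d d \<and> X2 \<in> carrier_mat d d \<and>
         (s \<cdot>\<^sub>m 1\<^sub>m d - A1) * X1 = 1\<^sub>m d \<and> X1 * (s \<cdot>\<^sub>m 1\<^sub>m d - A1) = 1\<^sub>m d \<and>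
         (s \<cdot>\<^sub>m 1\<^sub>m d - A2) * X2 = 1\<^sub>m d \<and> X2 * (s \<cdot>\<^sub>m 1\<^sub>m d - A2) = 1\<^sub>m d \<and>
         row C1 a \<bullet> (X1 *\<^sub>v col B1 b) = row C2 a \<bullet> (X2 *\<^sub>v col B2 b)"
        using i1 i2 by blast
    qed
    then show "(C1 * A1 ^\<^sub>m k * B1) $$ (a,b) = (C2 * A2 ^\<^sub>m k * B2) $$ (a,b)"
      using entry_CXB[OF C1 pow_carrier_mat[OF A1] B1 a b] entry_CXB[OF C2 pow_carrier_mat[OF A2] B2 a b]
      by simp
  qed (use C1 C2 B1 B2 A1 A2 in auto)
qed


lemma pow_intertwine:
  fixes S A1 A2 :: "complex mat"
  assumes S: "S \<in> carrier_mat d d" and A1: "A1 \<in> carrier_mat d d" and A2: "A2 \<in> carrier_mat d d"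
    and c: "S * A1 = A2 * S"
  shows "S * A1 ^\<^sub>m k = A2 ^\<^sub>m k * S"
proof (induction k)
  case 0 then show ?case using S A1 A2 by simp
next
  case (Suc k)
  have P1: "A1 ^\<^sub>m k \<in> carrier_mat d d" and P2: "A2 ^\<^sub>m k \<in> carrier_mat d d" using A1 A2 by auto
  have "S * A1 ^\<^sub>m Suc k = (S * A1 ^\<^sub>m k) * A1" using assoc_mult_mat[OF S P1 A1] by simp
  also have "\<dots> = A2 ^\<^sub>m k * (S * A1)" using Suc assoc_mult_mat[OF P2 S A1] by simp
  also have "\<dots> = (A2 ^\<^sub>m k * A2) * S" using c assoc_mult_mat[OF P2 A2 S] by simp
  finally show ?case by simp
qed

lemma sim_ctrb:
  fixes S A1 A2 B1 B2 :: "complex mat"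
  assumes S: "S \<in> carrier_mat d d" and A1: "A1 \<in> carrier_mat d d" and A2: "A2 \<in> carrier_mat d d"
    and B1: "B1 \<in> carrier_mat d n" and B2: "B2 \<in> carrier_mat d n"
    and c: "S * A1 = A2 * S" and b: "S * B1 = B2"
  shows "S * ctrb_mat A1 B1 = ctrb_mat A2 B2"
proof (rule eq_matI)
  note K1 = ctrb_carrier[OF A1 B1] and K2 = ctrb_carrier[OF A2 B2]
  fix i j assume i: "i < dim_row (ctrb_mat A2 B2)" and j: "j < dim_col (ctrb_mat A2 B2)"
  then have i: "i < d" and j: "j < d * n" using K2 by auto
  have n: "0 < n" using j by (cases n) auto
  have jm: "j mod n < n" using n by simp
  have P1: "A1 ^\<^sub>m (j div n) \<in> carrier_mat d d" and P2: "A2 ^\<^sub>m (j div n) \<in> carrier_mat d d"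
    using A1 A2 by auto
  have "(S * ctrb_mat A1 B1) $$ (i,j) = row S i \<bullet> col (ctrb_mat A1 B1) j" using S K1 i j by simp
  also have "\<dots> = row S i \<bullet> col (A1 ^\<^sub>m (j div n) * B1) (j mod n)" using col_ctrb[OF A1 B1 j] by simp
  also have "\<dots> = (S * (A1 ^\<^sub>m (j div n) * B1)) $$ (i, j mod n)"
    by (rule index_mult_mat(1)[symmetric]) (use S P1 B1 i jm in auto)
  also have "S * (A1 ^\<^sub>m (j div n) * B1) = A2 ^\<^sub>m (j div n) * B2"
    using assoc_mult_mat[OF S P1 B1] pow_intertwine[OF S A1 A2 c] assoc_mult_mat[OF P2 S B1] b by simp
  also have "(A2 ^\<^sub>m (j div n) * B2) $$ (i, j mod n) = col (A2 ^\<^sub>m (j div n) * B2) (j mod n) $ i"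
    by (rule index_col[symmetric]) (use i jm mult_carrier_mat[OF P2 B2] in auto)
  also have "\<dots> = col (ctrb_mat A2 B2) j $ i" by (simp only: col_ctrb[OF A2 B2 j])
  also have "\<dots> = ctrb_mat A2 B2 $$ (i,j)" using K2 i j by simp
  finally show "(S * ctrb_mat A1 B1) $$ (i,j) = ctrb_mat A2 B2 $$ (i,j)" .
qed (use S ctrb_carrier[OF A1 B1] ctrb_carrier[OF A2 B2] in auto)

lemma sim_obsv:
  fixes U A1 A2 C1 C2 :: "complex mat"
  assumes U: "U \<in> carrier_mat d d" and A1: "A1 \<in> carrier_mat d d" and A2: "A2 \<in> carrier_mat d d"
    and C1: "C1 \<in> carrier_mat n d" and C2: "C2 \<in> carrier_mat n d"
    and c: "A1 * U = U * A2" and b: "C1 * U = C2"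
  shows "obsv_mat A1 C1 * U = obsv_mat A2 C2"
proof (rule eq_matI)
  note O1 = obsv_carrier[OF A1 C1] and O2 = obsv_carrier[OF A2 C2]
  fix i j assume i: "i < dim_row (obsv_mat A2 C2)" and j: "j < dim_col (obsv_mat A2 C2)"
  then have i: "i < d * n" and j: "j < d" using O2 by auto
  have n: "0 < n" using i by (cases n) auto
  have im: "i mod n < n" using n by simp
  have P1: "A1 ^\<^sub>m (i div n) \<in> carrier_mat d d" and P2: "A2 ^\<^sub>m (i div n) \<in> carrier_mat d d"
    using A1 A2 by auto
  have CP1: "C1 * A1 ^\<^sub>m (i div n) \<in> carrier_mat n d" using mult_carrier_mat[OF C1 P1] .
  have CP2: "C2 * A2 ^\<^sub>m (i div n) \<in> carrier_mat n d" using mult_carrier_mat[OF C2 P2] .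
  have c': "A1 ^\<^sub>m (i div n) * U = U * A2 ^\<^sub>m (i div n)"
    using pow_intertwine[OF U A2 A1 c[symmetric], of "i div n"] by simp
  have "(obsv_mat A1 C1 * U) $$ (i,j) = row (obsv_mat A1 C1) i \<bullet> col U j" using U O1 i j by simp
  also have "\<dots> = row (C1 * A1 ^\<^sub>m (i div n)) (i mod n) \<bullet> col U j" using row_obsv[OF A1 C1 i] by simp
  also have "\<dots> = (C1 * A1 ^\<^sub>m (i div n) * U) $$ (i mod n, j)"
    by (rule index_mult_mat(1)[symmetric]) (use CP1 U j im in auto)
  also have "C1 * A1 ^\<^sub>m (i div n) * U = C2 * A2 ^\<^sub>m (i div n)"
    using assoc_mult_mat[OF C1 P1 U] c' assoc_mult_mat[OF C1 U P2] b by simp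
  also have "(C2 * A2 ^\<^sub>m (i div n)) $$ (i mod n, j) = row (C2 * A2 ^\<^sub>m (i div n)) (i mod n) $ j"
    by (rule index_row(1)[symmetric]) (use j im CP2 in auto)
  also have "\<dots> = row (obsv_mat A2 C2) i $ j" by (simp only: row_obsv[OF A2 C2 i])
  also have "\<dots> = obsv_mat A2 C2 $$ (i,j)" using O2 i j by simp
  finally show "(obsv_mat A1 C1 * U) $$ (i,j) = obsv_mat A2 C2 $$ (i,j)" .
qed (use U obsv_carrier[OF A1 C1] obsv_carrier[OF A2 C2] in auto)

lemma ctrb_sel:
  fixes A B :: "complex mat"
  assumes A: "A \<in> carrier_mat d d" and B: "B \<in> carrier_mat d n"
  shows "ctrb_mat A B * mat (d * n) n (\<lambda>(j,q). if j = q then 1 else 0) = B"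
proof (rule eq_matI)
  note K = ctrb_carrier[OF A B]
  fix i q assume i: "i < dim_row B" and q: "q < dim_col B"
  then have i: "i < d" and q: "q < n" using B by auto
  have qd: "q < d * n" using i q by (cases d) auto
  have "(ctrb_mat A B * mat (d * n) n (\<lambda>(j,q). if j = q then 1 else 0)) $$ (i,q) =
    (\<Sum>j\<in>{0..<d*n}. ctrb_mat A B $$ (i,j) * (if j = q then 1 else 0))"
    using K i q by (simp add: scalar_prod_def)
  also have "\<dots> = (\<Sum>j\<in>{0..<d*n}. if j = q then ctrb_mat A B $$ (i,j) else 0)"
    by (intro sum.cong) auto
  also have "\<dots> = ctrb_mat A B $$ (i,q)" using qd by simp
  also have "\<dots> = B $$ (i,q)" using i q qd A B unfolding ctrb_mat_def Let_def by simp
  finally show "(ctrb_mat A B * mat (d * n) n (\<lambda>(j,q). if j = q then 1 else 0)) $$ (i,q) = B $$ (i,q)" .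
qed (use B ctrb_carrier[OF A B] in auto)

lemma obsv_sel:
  fixes A C :: "complex mat"
  assumes A: "A \<in> carrier_mat d d" and C: "C \<in> carrier_mat n d"
  shows "mat n (d * n) (\<lambda>(p,i). if i = p then 1 else 0) * obsv_mat A C = C"
proof (rule eq_matI)
  note O = obsv_carrier[OF A C]
  fix p j assume p: "p < dim_row C" and j: "j < dim_col C"
  then have p: "p < n" and j: "j < d" using C by auto
  have pd: "p < d * n" using j p by (cases d) auto
  have "(mat n (d * n) (\<lambda>(p,i). if i = p then 1 else 0) * obsv_mat A C) $$ (p,j) =
    (\<Sum>i\<in>{0..<d*n}. (if i = p then 1 else 0) * obsv_mat A C $$ (i,j))"
    using O p j by (simp add: scalar_prod_def)
  also have "\<dots> = (\<Sum>i\<in>{0..<d*n}. if i = p then obsv_mat A C $$ (i,j) else 0)"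
    by (intro sum.cong) auto
  also have "\<dots> = obsv_mat A C $$ (p,j)" using pd by simp
  also have "\<dots> = C $$ (p,j)" using p j pd A C unfolding obsv_mat_def Let_def by simp
  finally show "(mat n (d * n) (\<lambda>(p,i). if i = p then 1 else 0) * obsv_mat A C) $$ (p,j) = C $$ (p,j)" .
qed (use C obsv_carrier[OF A C] in auto)


lemma pow_collapse:
  fixes A B C :: "complex mat"
  assumes A: "A \<in> carrier_mat d d" and B: "B \<in> carrier_mat d n" and C: "C \<in> carrier_mat n d"
  shows "C * A ^\<^sub>m a * A ^\<^sub>m e * (A ^\<^sub>m b * B) = C * A ^\<^sub>m (a + e + b) * B"
proof -
  have Pa: "A ^\<^sub>m a \<in> carrier_mat d d" and Pe: "A ^\<^sub>m e \<in> carrier_mat d d"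
    and Pb: "A ^\<^sub>m b \<in> carrier_mat d d" and Pae: "A ^\<^sub>m (a + e) \<in> carrier_mat d d" using A by auto
  have "C * A ^\<^sub>m a * A ^\<^sub>m e = C * A ^\<^sub>m (a + e)"
    using assoc_mult_mat[OF C Pa Pe] pow_mat_add[OF A, of a e] by simp
  moreover have "C * A ^\<^sub>m (a + e) * (A ^\<^sub>m b * B) = C * A ^\<^sub>m (a + e + b) * B"
  proof -
    have CP: "C * A ^\<^sub>m (a + e) \<in> carrier_mat n d" using mult_carrier_mat[OF C Pae] .
    have "C * A ^\<^sub>m (a + e) * (A ^\<^sub>m b * B) = C * A ^\<^sub>m (a + e) * A ^\<^sub>m b * B"
      using assoc_mult_mat[OF CP Pb B] by simp
    also have "C * A ^\<^sub>m (a + e) * A ^\<^sub>m b = C * A ^\<^sub>m (a + e + b)"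
      using assoc_mult_mat[OF C Pae Pb] pow_mat_add[OF A, of "a + e" b] by simp
    finally show ?thesis .
  qed
  ultimately show ?thesis by simp
qed

lemma hankel_eq:
  fixes A1 B1 C1 A2 B2 C2 :: "complex mat"
  assumes R1: "is_realization n G d A1 B1 C1" and R2: "is_realization n G d A2 B2 C2"
  shows "obsv_mat A1 C1 * A1 ^\<^sub>m e * ctrb_mat A1 B1 = obsv_mat A2 C2 * A2 ^\<^sub>m e * ctrb_mat A2 B2"
proof -
  from R1 have A1: "A1 \<in> carrier_mat d d" and B1: "B1 \<in> carrier_mat d n" and C1: "C1 \<in> carrier_mat n d"
    unfolding is_realization_def by auto
  from R2 have A2: "A2 \<in> carrier_mat d d" and B2: "B2 \<in> carrier_mat d n" and C2: "C2 \<in> carrier_mat n d"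
    unfolding is_realization_def by auto
  have M1: "obsv_mat A1 C1 * A1 ^\<^sub>m e * ctrb_mat A1 B1 \<in> carrier_mat (d*n) (d*n)"
    using obsv_carrier[OF A1 C1] ctrb_carrier[OF A1 B1] A1 by (meson mult_carrier_mat pow_carrier_mat)
  have M2: "obsv_mat A2 C2 * A2 ^\<^sub>m e * ctrb_mat A2 B2 \<in> carrier_mat (d*n) (d*n)"
    using obsv_carrier[OF A2 C2] ctrb_carrier[OF A2 B2] A2 by (meson mult_carrier_mat pow_carrier_mat)
  show ?thesis
  proof (rule eq_matI)
    fix i j assume i: "i < dim_row (obsv_mat A2 C2 * A2 ^\<^sub>m e * ctrb_mat A2 B2)"
      and j: "j < dim_col (obsv_mat A2 C2 * A2 ^\<^sub>m e * ctrb_mat A2 B2)"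
    then have i: "i < d * n" and j: "j < d * n" using M2 by auto
    show "(obsv_mat A1 C1 * A1 ^\<^sub>m e * ctrb_mat A1 B1) $$ (i,j) = (obsv_mat A2 C2 * A2 ^\<^sub>m e * ctrb_mat A2 B2) $$ (i,j)"
      unfolding hankel_entry[OF A1 B1 C1 pow_carrier_mat[OF A1] i j] hankel_entry[OF A2 B2 C2 pow_carrier_mat[OF A2] i j]
        pow_collapse[OF A1 B1 C1] pow_collapse[OF A2 B2 C2] markov_eq[OF R1 R2] ..
  qed (use M1 M2 obsv_carrier[OF A1 C1] obsv_carrier[OF A2 C2] ctrb_carrier[OF A1 B1] ctrb_carrier[OF A2 B2] in auto)
qed

lemma left_inv_obsv:
  fixes A C :: "complex mat"
  assumes A: "A \<in> carrier_mat d d" and C: "C \<in> carrier_mat n d" and ob: "observable A C"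
  shows "\<exists>L \<in> carrier_mat d (d * n). L * obsv_mat A C = 1\<^sub>m d"
proof -
  note O = obsv_carrier[OF A C]
  have OT: "transpose_mat (obsv_mat A C) \<in> carrier_mat d (d * n)" using O by simp
  have "vec_space.rank d (transpose_mat (obsv_mat A C)) = d"
    using ob A unfolding observable_def by simp
  from rank_right_inv[OF OT this] obtain R where R: "R \<in> carrier_mat (d * n) d"
    and e: "transpose_mat (obsv_mat A C) * R = 1\<^sub>m d" by blast
  have "transpose_mat (transpose_mat (obsv_mat A C) * R) = transpose_mat R * obsv_mat A C"
    using transpose_mult[OF OT R] by simp
  with e have "transpose_mat R * obsv_mat A C = 1\<^sub>m d" by simp
  moreover have "transpose_mat R \<in> carrier_mat d (d * n)" using R by simp
  ultimately show ?thesis by blast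
qed

lemma right_inv_ctrb:
  fixes A B :: "complex mat"
  assumes A: "A \<in> carrier_mat d d" and B: "B \<in> carrier_mat d n" and co: "controllable A B"
  shows "\<exists>R \<in> carrier_mat (d * n) d. ctrb_mat A B * R = 1\<^sub>m d"
proof -
  have "vec_space.rank d (ctrb_mat A B) = d" using co A unfolding controllable_def by simp
  from rank_right_inv[OF ctrb_carrier[OF A B] this] show ?thesis .
qed

lemma realization_similar:
  fixes A1 B1 C1 A2 B2 C2 :: "complex mat"
  assumes R1: "is_realization n G d A1 B1 C1" and R2: "is_realization n G d A2 B2 C2"
    and co1: "controllable A1 B1" and ob1: "observable A1 C1"
    and co2: "controllable A2 B2" and ob2: "observable A2 C2"
  shows "\<exists>T U. T \<in> carrier_mat d d \<and> U \<in> carrier_mat d d \<and> T * U = 1\<^sub>m d \<and> U * T = 1\<^sub>m d \<and>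
     A2 = T * A1 * U \<and> B2 = T * B1 \<and> C2 = C1 * U"
proof -
  from R1 have A1: "A1 \<in> carrier_mat d d" and B1: "B1 \<in> carrier_mat d n" and C1: "C1 \<in> carrier_mat n d"
    unfolding is_realization_def by auto
  from R2 have A2: "A2 \<in> carrier_mat d d" and B2: "B2 \<in> carrier_mat d n" and C2: "C2 \<in> carrier_mat n d"
    unfolding is_realization_def by auto
  define K1 where "K1 = ctrb_mat A1 B1"
  define K2 where "K2 = ctrb_mat A2 B2"
  define O1 where "O1 = obsv_mat A1 C1"
  define O2 where "O2 = obsv_mat A2 C2"
  have K1: "K1 \<in> carrier_mat d (d*n)" unfolding K1_def using ctrb_carrier[OF A1 B1] .
  have K2: "K2 \<in> carrier_mat d (d*n)" unfolding K2_def using ctrb_carrier[OF A2 B2] .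
  have O1: "O1 \<in> carrier_mat (d*n) d" unfolding O1_def using obsv_carrier[OF A1 C1] .
  have O2: "O2 \<in> carrier_mat (d*n) d" unfolding O2_def using obsv_carrier[OF A2 C2] .
  obtain K2i where K2i: "K2i \<in> carrier_mat (d*n) d" and eK2: "K2 * K2i = 1\<^sub>m d"
    using right_inv_ctrb[OF A2 B2 co2] unfolding K2_def by blast
  obtain O2i where O2i: "O2i \<in> carrier_mat d (d*n)" and eO2: "O2i * O2 = 1\<^sub>m d"
    using left_inv_obsv[OF A2 C2 ob2] unfolding O2_def by blast
  have H0: "O1 * K1 = O2 * K2"
    using hankel_eq[OF R1 R2, of 0] A1 A2 O1 O2 unfolding K1_def K2_def O1_def O2_def by simp
  have H1: "O1 * A1 * K1 = O2 * A2 * K2"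
    using hankel_eq[OF R1 R2, of 1] A1 A2 O1 O2 unfolding K1_def K2_def O1_def O2_def by simp
  define T where "T = O2i * O1"
  define U where "U = K1 * K2i"
  have T: "T \<in> carrier_mat d d" unfolding T_def using O2i O1 by simp
  have U: "U \<in> carrier_mat d d" unfolding U_def using K1 K2i by simp
  have TK: "T * K1 = K2"
  proof -
    have "T * K1 = O2i * (O1 * K1)" unfolding T_def using assoc_mult_mat[OF O2i O1 K1] .
    also have "\<dots> = (O2i * O2) * K2" unfolding H0 using assoc_mult_mat[OF O2i O2 K2] by simp
    finally show ?thesis using eO2 K2 by simp
  qed
  have OU: "O1 * U = O2"
  proof -
    have "O1 * U = (O1 * K1) * K2i" unfolding U_def using assoc_mult_mat[OF O1 K1 K2i] by simp
    also have "\<dots> = O2 * (K2 * K2i)" unfolding H0 using assoc_mult_mat[OF O2 K2 K2i] .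
    finally show ?thesis using eK2 O2 by simp
  qed
  have TU: "T * U = 1\<^sub>m d"
  proof -
    have "T * U = O2i * (O1 * U)" unfolding T_def using assoc_mult_mat[OF O2i O1 U] .
    then show ?thesis using OU eO2 by simp
  qed
  have UT: "U * T = 1\<^sub>m d" using mat_mult_left_right_inverse[OF T U TU] .
  have AT: "A2 = T * A1 * U"
  proof -
    have X: "O1 * A1 \<in> carrier_mat (d*n) d" using mult_carrier_mat[OF O1 A1] .
    have Y: "O2 * A2 \<in> carrier_mat (d*n) d" using mult_carrier_mat[OF O2 A2] .
    have OX: "O2i * (O1 * A1) \<in> carrier_mat d d" using mult_carrier_mat[OF O2i X] .
    have OY: "O2i * (O2 * A2) \<in> carrier_mat d d" using mult_carrier_mat[OF O2i Y] .
    have "T * A1 * U = (O2i * (O1 * A1)) * (K1 * K2i)"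
      unfolding T_def U_def using assoc_mult_mat[OF O2i O1 A1] by simp
    also have "\<dots> = ((O2i * (O1 * A1)) * K1) * K2i" using assoc_mult_mat[OF OX K1 K2i] by simp
    also have "(O2i * (O1 * A1)) * K1 = O2i * (O1 * A1 * K1)" using assoc_mult_mat[OF O2i X K1] .
    also have "\<dots> = O2i * (O2 * A2 * K2)" unfolding H1 ..
    also have "\<dots> = (O2i * (O2 * A2)) * K2" using assoc_mult_mat[OF O2i Y K2] by simp
    also have "(O2i * (O2 * A2)) * K2 * K2i = (O2i * (O2 * A2)) * (K2 * K2i)"
      using assoc_mult_mat[OF OY K2 K2i] .
    also have "O2i * (O2 * A2) = A2" using assoc_mult_mat[OF O2i O2 A2] eO2 A2 by simp
    finally show ?thesis using eK2 A2 by simp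
  qed
  define E where "E = mat (d * n) n (\<lambda>(j,q). if j = q then (1::complex) else 0)"
  define F where "F = mat n (d * n) (\<lambda>(p,i). if i = p then (1::complex) else 0)"
  have E: "E \<in> carrier_mat (d*n) n" unfolding E_def by simp
  have F: "F \<in> carrier_mat n (d*n)" unfolding F_def by simp
  have BT: "B2 = T * B1"
  proof -
    have "T * B1 = T * (K1 * E)" using ctrb_sel[OF A1 B1] unfolding K1_def E_def by simp
    also have "\<dots> = (T * K1) * E" using assoc_mult_mat[OF T K1 E] by simp
    also have "\<dots> = B2" using TK ctrb_sel[OF A2 B2] unfolding K2_def E_def by simp
    finally show ?thesis by simp
  qed
  have CU: "C2 = C1 * U"
  proof -
    have "C1 * U = (F * O1) * U" using obsv_sel[OF A1 C1] unfolding O1_def F_def by simp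
    also have "\<dots> = F * (O1 * U)" using assoc_mult_mat[OF F O1 U] .
    also have "\<dots> = C2" using OU obsv_sel[OF A2 C2] unfolding O2_def F_def by simp
    finally show ?thesis by simp
  qed
  show ?thesis using T U TU UT AT BT CU by blast
qed

lemma sim_unique:
  fixes A1 B1 A2 B2 S1 S2 :: "complex mat"
  assumes A1: "A1 \<in> carrier_mat d d" and A2: "A2 \<in> carrier_mat d d"
    and B1: "B1 \<in> carrier_mat d n" and B2: "B2 \<in> carrier_mat d n"
    and co1: "controllable A1 B1"
    and S1: "S1 \<in> carrier_mat d d" and c1: "S1 * A1 = A2 * S1" and b1: "S1 * B1 = B2"
    and S2: "S2 \<in> carrier_mat d d" and c2: "S2 * A1 = A2 * S2" and b2: "S2 * B1 = B2"
  shows "S1 = S2"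
proof -
  obtain K1i where K1i: "K1i \<in> carrier_mat (d*n) d" and e: "ctrb_mat A1 B1 * K1i = 1\<^sub>m d"
    using right_inv_ctrb[OF A1 B1 co1] by blast
  note K1 = ctrb_carrier[OF A1 B1]
  have "S1 = S1 * (ctrb_mat A1 B1 * K1i)" using e S1 by simp
  also have "\<dots> = (S1 * ctrb_mat A1 B1) * K1i" using assoc_mult_mat[OF S1 K1 K1i] by simp
  also have "\<dots> = ctrb_mat A2 B2 * K1i" using sim_ctrb[OF S1 A1 A2 B1 B2 c1 b1] by simp
  also have "\<dots> = (S2 * ctrb_mat A1 B1) * K1i" using sim_ctrb[OF S2 A1 A2 B1 B2 c2 b2] by simp
  also have "\<dots> = S2 * (ctrb_mat A1 B1 * K1i)" using assoc_mult_mat[OF S2 K1 K1i] by simp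
  also have "\<dots> = S2" using e S2 by simp
  finally show ?thesis .
qed


lemma det_zero_row:
  fixes M :: "complex mat"
  assumes M: "M \<in> carrier_mat N N" and r: "r < N" and z: "\<And>j. j < N \<Longrightarrow> M $$ (r,j) = 0"
  shows "det M = 0"
proof -
  have MT: "transpose_mat M \<in> carrier_mat N N" using M by simp
  have "transpose_mat M *\<^sub>v unit_vec N r = 0\<^sub>v N"
  proof (rule eq_vecI)
    fix i assume i: "i < dim_vec (0\<^sub>v N)"
    have "(transpose_mat M *\<^sub>v unit_vec N r) $ i = row (transpose_mat M) i \<bullet> unit_vec N r"
      using i MT by simp
    also have "\<dots> = row (transpose_mat M) i $ r" using r by simp
    also have "\<dots> = 0" using i M r z by simp
    finally show "(transpose_mat M *\<^sub>v unit_vec N r) $ i = 0\<^sub>v N $ i" using i by simp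
  qed (use MT in simp)
  moreover have "(unit_vec N r :: complex vec) \<noteq> 0\<^sub>v N"
  proof
    assume e: "(unit_vec N r :: complex vec) = 0\<^sub>v N"
    have "(unit_vec N r :: complex vec) $ r = 1" using r by simp
    moreover have "0\<^sub>v N $ r = (0::complex)" using r by simp
    ultimately show False unfolding e by simp
  qed
  moreover have "(unit_vec N r :: complex vec) \<in> carrier_vec N" by simp
  ultimately have "det (transpose_mat M) = 0"
    using det_0_iff_vec_prod_zero[OF MT] by blast
  then show ?thesis using det_transpose[OF M] by simp
qed

lemma bil_sym:
  fixes T :: "complex mat"
  assumes T: "T \<in> carrier_mat d d" and s: "transpose_mat T = T"
    and x: "x \<in> carrier_vec d" and y: "y \<in> carrier_vec d"
  shows "x \<bullet> (T *\<^sub>v y) = y \<bullet> (T *\<^sub>v x)"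
proof -
  have "x \<bullet> (T *\<^sub>v y) = (transpose_mat T *\<^sub>v x) \<bullet> y" using transpose_vec_mult_scalar[OF T y x] by simp
  also have "\<dots> = y \<bullet> (T *\<^sub>v x)" using s comm_scalar_prod[of "T *\<^sub>v x" d y] T x y by simp
  finally show ?thesis .
qed

lemma bil_add_r:
  fixes T :: "complex mat"
  assumes T: "T \<in> carrier_mat d d" and x: "x \<in> carrier_vec d" and y: "y \<in> carrier_vec d" and z: "z \<in> carrier_vec d"
  shows "x \<bullet> (T *\<^sub>v (y + z)) = x \<bullet> (T *\<^sub>v y) + x \<bullet> (T *\<^sub>v z)"
  using T x y z by (simp add: mult_add_distrib_mat_vec[OF T y z] scalar_prod_add_distrib[of _ d])

lemma quad_entry:
  fixes T P :: "complex mat"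
  assumes T: "T \<in> carrier_mat d d" and P: "P \<in> carrier_mat d k" and i: "i < k" and j: "j < k"
  shows "(transpose_mat P * T * P) $$ (i,j) = col P i \<bullet> (T *\<^sub>v col P j)"
proof -
  have PT: "transpose_mat P \<in> carrier_mat k d" using P by simp
  have "transpose_mat P * T * P = transpose_mat P * (T * P)" using assoc_mult_mat[OF PT T P] .
  moreover have "(transpose_mat P * (T * P)) $$ (i,j) = row (transpose_mat P) i \<bullet> col (T * P) j"
    by (rule index_mult_mat(1)) (use PT T P i j in auto)
  moreover have "col (T * P) j = T *\<^sub>v col P j" by (rule col_mult2[OF T P j])
  moreover have "row (transpose_mat P) i = col P i" using P i by simp
  ultimately show ?thesis by simp
qed

lemma PTv_index:
  fixes P :: "complex mat"
  assumes P: "P \<in> carrier_mat d k" and i: "i < k"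
  shows "(transpose_mat P *\<^sub>v v) $ i = col P i \<bullet> v"
  using P i by simp

lemma aniso_exists:
  fixes T P :: "complex mat"
  assumes T: "T \<in> carrier_mat d d" and s: "transpose_mat T = T" and dT: "det T \<noteq> 0"
    and P: "P \<in> carrier_mat d k" and kd: "k < d" and orth: "transpose_mat P * T * P = 1\<^sub>m k"
  shows "\<exists>x \<in> carrier_vec d. transpose_mat P *\<^sub>v (T *\<^sub>v x) = 0\<^sub>v k \<and> x \<bullet> (T *\<^sub>v x) \<noteq> 0"
proof (rule ccontr)
  assume "\<not> ?thesis"
  then have H: "\<And>x. x \<in> carrier_vec d \<Longrightarrow> transpose_mat P *\<^sub>v (T *\<^sub>v x) = 0\<^sub>v k \<Longrightarrow> x \<bullet> (T *\<^sub>v x) = 0"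
    by blast
  have PT: "transpose_mat P \<in> carrier_mat k d" using P by simp
  have PTT: "transpose_mat P * T \<in> carrier_mat k d" using mult_carrier_mat[OF PT T] .
  define Mp where "Mp = mat d d (\<lambda>(i,j). if i < k then (transpose_mat P * T) $$ (i,j) else 0)"
  have Mp: "Mp \<in> carrier_mat d d" unfolding Mp_def by simp
  have "det Mp = 0"
    by (rule det_zero_row[OF Mp, of "d - 1"]) (use kd in \<open>auto simp: Mp_def\<close>)
  then obtain w where w: "w \<in> carrier_vec d" "w \<noteq> 0\<^sub>v d" "Mp *\<^sub>v w = 0\<^sub>v d"
    using det_0_iff_vec_prod_zero[OF Mp] by auto
  have Ww: "transpose_mat P *\<^sub>v (T *\<^sub>v w) = 0\<^sub>v k"
  proof (rule eq_vecI)
    fix i assume i: "i < dim_vec (0\<^sub>v k)"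
    then have i: "i < k" by simp
    have "(transpose_mat P *\<^sub>v (T *\<^sub>v w)) $ i = ((transpose_mat P * T) *\<^sub>v w) $ i"
      using assoc_mult_mat_vec[OF PT T w(1)] by simp
    also have "\<dots> = row (transpose_mat P * T) i \<bullet> w" by (rule index_mult_mat_vec) (use PTT i in auto)
    also have "row (transpose_mat P * T) i = row Mp i"
    proof (rule eq_vecI)
      fix ia assume "ia < dim_vec (row Mp i)"
      then have ia: "ia < d" unfolding Mp_def by simp
      show "row (transpose_mat P * T) i $ ia = row Mp i $ ia"
        using i kd ia index_row(1)[of i "transpose_mat P * T" ia] carrier_matD[OF PTT] unfolding Mp_def by auto
    qed (use PTT Mp_def in auto)
    also have "row Mp i \<bullet> w = (Mp *\<^sub>v w) $ i" using Mp i kd by simp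
    also have "\<dots> = 0" using w(3) i kd by simp
    finally show "(transpose_mat P *\<^sub>v (T *\<^sub>v w)) $ i = 0\<^sub>v k $ i" using i by simp
  qed (use PT in simp)
  have polar: "x \<bullet> (T *\<^sub>v y) = 0"
    if x: "x \<in> carrier_vec d" "transpose_mat P *\<^sub>v (T *\<^sub>v x) = 0\<^sub>v k"
    and y: "y \<in> carrier_vec d" "transpose_mat P *\<^sub>v (T *\<^sub>v y) = 0\<^sub>v k" for x y
  proof -
    have xy: "x + y \<in> carrier_vec d" using x y by simp
    have "transpose_mat P *\<^sub>v (T *\<^sub>v (x + y)) = transpose_mat P *\<^sub>v (T *\<^sub>v x) + transpose_mat P *\<^sub>v (T *\<^sub>v y)"
      using T x y PT by (simp add: mult_add_distrib_mat_vec[OF T] mult_add_distrib_mat_vec[OF PT])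
    also have "\<dots> = 0\<^sub>v k" using x y by simp
    finally have Wxy: "transpose_mat P *\<^sub>v (T *\<^sub>v (x + y)) = 0\<^sub>v k" .
    have Tx: "T *\<^sub>v x \<in> carrier_vec d" and Ty: "T *\<^sub>v y \<in> carrier_vec d" using T x y by auto
    have "(x + y) \<bullet> (T *\<^sub>v (x + y)) = (x + y) \<bullet> (T *\<^sub>v x) + (x + y) \<bullet> (T *\<^sub>v y)"
      using bil_add_r[OF T xy x(1) y(1)] .
    also have "\<dots> = x \<bullet> (T *\<^sub>v x) + y \<bullet> (T *\<^sub>v x) + (x \<bullet> (T *\<^sub>v y) + y \<bullet> (T *\<^sub>v y))"
      using add_scalar_prod_distrib[OF x(1) y(1) Tx] add_scalar_prod_distrib[OF x(1) y(1) Ty] by simp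
    also have "y \<bullet> (T *\<^sub>v x) = x \<bullet> (T *\<^sub>v y)" using bil_sym[OF T s y(1) x(1)] .
    finally have "(x + y) \<bullet> (T *\<^sub>v (x + y)) = x \<bullet> (T *\<^sub>v x) + 2 * (x \<bullet> (T *\<^sub>v y)) + y \<bullet> (T *\<^sub>v y)"
      by simp
    then show ?thesis using H[OF xy Wxy] H[OF x] H[OF y] by simp
  qed
  have wz: "w \<bullet> (T *\<^sub>v z) = 0" if z: "z \<in> carrier_vec d" for z
  proof -
    define c where "c = transpose_mat P *\<^sub>v (T *\<^sub>v z)"
    have c: "c \<in> carrier_vec k" unfolding c_def using PT T z by auto
    have Pc: "P *\<^sub>v c \<in> carrier_vec d" using P c by auto
    define r where "r = z - P *\<^sub>v c"
    have rc: "r \<in> carrier_vec d" unfolding r_def using z Pc by simp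
    have zr: "z = r + P *\<^sub>v c" unfolding r_def using z Pc P by (intro eq_vecI) auto
    have PTP: "transpose_mat P *\<^sub>v (T *\<^sub>v (P *\<^sub>v c)) = c"
    proof -
      have "transpose_mat P *\<^sub>v (T *\<^sub>v (P *\<^sub>v c)) = transpose_mat P *\<^sub>v ((T * P) *\<^sub>v c)"
        using assoc_mult_mat_vec[OF T P c] by simp
      also have "\<dots> = (transpose_mat P * (T * P)) *\<^sub>v c"
        using assoc_mult_mat_vec[OF PT mult_carrier_mat[OF T P] c] by simp
      also have "\<dots> = (transpose_mat P * T * P) *\<^sub>v c"
        using assoc_mult_mat[OF PT T P] by simp
      finally have "transpose_mat P *\<^sub>v (T *\<^sub>v (P *\<^sub>v c)) = (transpose_mat P * T * P) *\<^sub>v c" .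
      then show ?thesis using orth c by simp
    qed
    have Wr: "transpose_mat P *\<^sub>v (T *\<^sub>v r) = 0\<^sub>v k"
    proof -
      have "T *\<^sub>v r = T *\<^sub>v z - T *\<^sub>v (P *\<^sub>v c)" unfolding r_def
        using mult_minus_distrib_mat_vec[OF T z Pc] .
      then have "transpose_mat P *\<^sub>v (T *\<^sub>v r) = transpose_mat P *\<^sub>v (T *\<^sub>v z) - transpose_mat P *\<^sub>v (T *\<^sub>v (P *\<^sub>v c))"
        using mult_minus_distrib_mat_vec[OF PT] T z Pc by simp
      also have "\<dots> = c - c" by (simp only: PTP c_def[symmetric])
      also have "\<dots> = 0\<^sub>v k" using c by simp
      finally show ?thesis .
    qed
    have "w \<bullet> (T *\<^sub>v z) = w \<bullet> (T *\<^sub>v r) + w \<bullet> (T *\<^sub>v (P *\<^sub>v c))"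
      unfolding zr using bil_add_r[OF T w(1) rc Pc] .
    also have "w \<bullet> (T *\<^sub>v r) = 0" using polar[OF w(1) Ww rc Wr] .
    also have "w \<bullet> (T *\<^sub>v (P *\<^sub>v c)) = (P *\<^sub>v c) \<bullet> (T *\<^sub>v w)" using bil_sym[OF T s w(1) Pc] .
    also have "\<dots> = c \<bullet> (transpose_mat P *\<^sub>v (T *\<^sub>v w))"
      using transpose_vec_mult_scalar[OF P c, of "T *\<^sub>v w"] T w(1) comm_scalar_prod[of "P *\<^sub>v c" d "T *\<^sub>v w"] Pc
        comm_scalar_prod[of c k "transpose_mat P *\<^sub>v (T *\<^sub>v w)"] c PT
      by simp
    also have "\<dots> = 0" unfolding Ww using c by simp
    finally show ?thesis by simp
  qed
  have "T *\<^sub>v w = 0\<^sub>v d"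
  proof (rule eq_vecI)
    fix j assume j: "j < dim_vec (0\<^sub>v d)"
    then have j: "j < d" by simp
    have "(T *\<^sub>v w) $ j = (T *\<^sub>v w) \<bullet> unit_vec d j" using j by simp
    also have "\<dots> = unit_vec d j \<bullet> (T *\<^sub>v w)"
      using comm_scalar_prod[of "T *\<^sub>v w" d "unit_vec d j"] T w(1) by simp
    also have "\<dots> = w \<bullet> (T *\<^sub>v unit_vec d j)" using bil_sym[OF T s _ w(1), of "unit_vec d j"] by simp
    also have "\<dots> = 0" using wz[of "unit_vec d j"] by simp
    finally show "(T *\<^sub>v w) $ j = 0\<^sub>v d $ j" using j by simp
  qed (use T in simp)
  then show False using det_0_iff_vec_prod_zero[OF T] dT w(1,2) by blast
qed


lemma extend_orth:
  fixes T P :: "complex mat"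
  assumes T: "T \<in> carrier_mat d d" and s: "transpose_mat T = T" and dT: "det T \<noteq> 0"
    and P: "P \<in> carrier_mat d k" and kd: "k < d" and orth: "transpose_mat P * T * P = 1\<^sub>m k"
  shows "\<exists>P' \<in> carrier_mat d (Suc k). transpose_mat P' * T * P' = 1\<^sub>m (Suc k)"
proof -
  obtain x where x: "x \<in> carrier_vec d" and Wx: "transpose_mat P *\<^sub>v (T *\<^sub>v x) = 0\<^sub>v k"
    and bx: "x \<bullet> (T *\<^sub>v x) \<noteq> 0"
    using aniso_exists[OF T s dT P kd orth] by blast
  define c where "c = 1 / csqrt (x \<bullet> (T *\<^sub>v x))"
  define p where "p = c \<cdot>\<^sub>v x"
  have p: "p \<in> carrier_vec d" unfolding p_def using x by simp
  have Tx: "T *\<^sub>v x \<in> carrier_vec d" using T x by simp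
  have pp: "p \<bullet> (T *\<^sub>v p) = 1"
  proof -
    have "p \<bullet> (T *\<^sub>v p) = c * c * (x \<bullet> (T *\<^sub>v x))"
      unfolding p_def using x T Tx by (simp add: mult_mat_vec[OF T x])
    also have "\<dots> = (x \<bullet> (T *\<^sub>v x)) / (csqrt (x \<bullet> (T *\<^sub>v x)))\<^sup>2"
      unfolding c_def by (simp add: power2_eq_square)
    also have "\<dots> = 1" using bx by simp
    finally show ?thesis .
  qed
  have Wp: "col P i \<bullet> (T *\<^sub>v p) = 0" if i: "i < k" for i
  proof -
    have "col P i \<bullet> (T *\<^sub>v p) = c * (col P i \<bullet> (T *\<^sub>v x))"
      unfolding p_def using x T Tx P i by (simp add: mult_mat_vec[OF T x])
    also have "col P i \<bullet> (T *\<^sub>v x) = (transpose_mat P *\<^sub>v (T *\<^sub>v x)) $ i" using P i by simp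
    also have "\<dots> = 0" using Wx i by simp
    finally show ?thesis by simp
  qed
  define P' where "P' = mat d (Suc k) (\<lambda>(a,b). if b < k then P $$ (a,b) else p $ a)"
  have P': "P' \<in> carrier_mat d (Suc k)" unfolding P'_def by simp
  have colP': "col P' b = (if b < k then col P b else p)" if b: "b < Suc k" for b
    using b P p unfolding P'_def by (auto intro!: eq_vecI)
  have cPc: "col P b \<in> carrier_vec d" if "b < k" for b using P that by simp
  have "transpose_mat P' * T * P' = 1\<^sub>m (Suc k)"
  proof (rule eq_matI)
    fix i j assume i: "i < dim_row (1\<^sub>m (Suc k))" and j: "j < dim_col (1\<^sub>m (Suc k))"
    then have i: "i < Suc k" and j: "j < Suc k" by auto
    have "(transpose_mat P' * T * P') $$ (i,j) = col P' i \<bullet> (T *\<^sub>v col P' j)"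
      using quad_entry[OF T P' i j] .
    also have "\<dots> = 1\<^sub>m (Suc k) $$ (i,j)"
    proof (cases "i < k")
      case True note ik = this
      show ?thesis
      proof (cases "j < k")
        case True
        have "col P i \<bullet> (T *\<^sub>v col P j) = (transpose_mat P * T * P) $$ (i,j)"
          using quad_entry[OF T P ik True] by simp
        then show ?thesis using colP'[OF i] colP'[OF j] ik True orth by simp
      next
        case False
        then have jk: "j = k" using j by simp
        show ?thesis using colP'[OF i] colP'[OF j] ik jk Wp[OF ik] by simp
      qed
    next
      case False
      then have ik: "i = k" using i by simp
      show ?thesis
      proof (cases "j < k")
        case True
        have "p \<bullet> (T *\<^sub>v col P j) = col P j \<bullet> (T *\<^sub>v p)" using bil_sym[OF T s p cPc[OF True]] .
        then show ?thesis using colP'[OF i] colP'[OF j] ik True Wp[OF True] by simp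
      next
        case False
        then have jk: "j = k" using j by simp
        show ?thesis using colP'[OF i] colP'[OF j] ik jk pp by simp
      qed
    qed
    finally show "(transpose_mat P' * T * P') $$ (i,j) = 1\<^sub>m (Suc k) $$ (i,j)" .
  qed (use P' T in auto)
  with P' show ?thesis by blast
qed

lemma orth_exists:
  fixes T :: "complex mat"
  assumes T: "T \<in> carrier_mat d d" and s: "transpose_mat T = T" and dT: "det T \<noteq> 0"
  shows "k \<le> d \<Longrightarrow> \<exists>P \<in> carrier_mat d k. transpose_mat P * T * P = 1\<^sub>m k"
proof (induction k)
  case 0
  have "transpose_mat (0\<^sub>m d 0) * T * 0\<^sub>m d 0 = (1\<^sub>m 0 :: complex mat)"
    using T by (intro eq_matI) auto
  then show ?case by (intro bexI[of _ "0\<^sub>m d 0"]) auto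
next
  case (Suc k)
  then obtain P where P: "P \<in> carrier_mat d k" and o: "transpose_mat P * T * P = 1\<^sub>m k" by auto
  show ?case using extend_orth[OF T s dT P _ o] Suc by simp
qed

lemma sym_factor:
  fixes T :: "complex mat"
  assumes T: "T \<in> carrier_mat d d" and s: "transpose_mat T = T" and dT: "det T \<noteq> 0"
  shows "\<exists>R P. R \<in> carrier_mat d d \<and> P \<in> carrier_mat d d \<and> R * P = 1\<^sub>m d \<and> P * R = 1\<^sub>m d \<and>
     transpose_mat R * R = T"
proof -
  obtain P where P: "P \<in> carrier_mat d d" and o: "transpose_mat P * T * P = 1\<^sub>m d"
    using orth_exists[OF T s dT, of d] by auto
  define R where "R = transpose_mat P * T"
  have PT: "transpose_mat P \<in> carrier_mat d d" using P by simp
  have R: "R \<in> carrier_mat d d" unfolding R_def using PT T by simp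
  have RP: "R * P = 1\<^sub>m d" unfolding R_def using o .
  have PR: "P * R = 1\<^sub>m d" using mat_mult_left_right_inverse[OF R P RP] .
  have "transpose_mat R = T * P"
    unfolding R_def using transpose_mult[OF PT T] s by simp
  then have "transpose_mat R * R = T * (P * R)"
    using assoc_mult_mat[OF T P R] by simp
  also have "\<dots> = T" using PR T by simp
  finally show ?thesis using R P RP PR by blast
qed


lemma pow_transpose:
  fixes A :: "complex mat"
  assumes A: "A \<in> carrier_mat d d"
  shows "transpose_mat A ^\<^sub>m k = transpose_mat (A ^\<^sub>m k)"
proof (induction k)
  case 0 then show ?case using A by simp
next
  case (Suc k)
  have P: "A ^\<^sub>m k \<in> carrier_mat d d" using A by simp
  have "transpose_mat A ^\<^sub>m Suc k = transpose_mat (A ^\<^sub>m k) * transpose_mat A" using Suc by simp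
  also have "\<dots> = transpose_mat (A * A ^\<^sub>m k)" using transpose_mult[OF A P] by simp
  also have "A * A ^\<^sub>m k = A ^\<^sub>m k * A" using pow_commute[OF A A refl, of k] by simp
  finally show ?case by simp
qed

lemma ctrb_transpose:
  fixes A C :: "complex mat"
  assumes A: "A \<in> carrier_mat d d" and C: "C \<in> carrier_mat n d"
  shows "ctrb_mat (transpose_mat A) (transpose_mat C) = transpose_mat (obsv_mat A C)"
proof (rule eq_matI)
  fix i j assume i: "i < dim_row (transpose_mat (obsv_mat A C))" and j: "j < dim_col (transpose_mat (obsv_mat A C))"
  then have i: "i < d" and j: "j < d * n" using obsv_carrier[OF A C] by auto
  have n: "0 < n" using j by (cases n) auto
  have jm: "j mod n < n" using n by simp
  have P: "A ^\<^sub>m (j div n) \<in> carrier_mat d d" using A by simp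
  have "ctrb_mat (transpose_mat A) (transpose_mat C) $$ (i,j) =
      (transpose_mat A ^\<^sub>m (j div n) * transpose_mat C) $$ (i, j mod n)"
    using A C i j unfolding ctrb_mat_def Let_def by simp
  also have "transpose_mat A ^\<^sub>m (j div n) * transpose_mat C = transpose_mat (C * A ^\<^sub>m (j div n))"
    using pow_transpose[OF A] transpose_mult[OF C P] by simp
  also have "transpose_mat (C * A ^\<^sub>m (j div n)) $$ (i, j mod n) = (C * A ^\<^sub>m (j div n)) $$ (j mod n, i)"
    using i jm carrier_matD[OF mult_carrier_mat[OF C P]] by simp
  also have "\<dots> = transpose_mat (obsv_mat A C) $$ (i,j)"
    using A C i j jm unfolding obsv_mat_def Let_def by simp
  finally show "ctrb_mat (transpose_mat A) (transpose_mat C) $$ (i,j) = transpose_mat (obsv_mat A C) $$ (i,j)" .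
qed (use A C obsv_carrier[OF A C] in \<open>auto simp: ctrb_mat_def Let_def\<close>)

lemma obsv_transpose:
  fixes A B :: "complex mat"
  assumes A: "A \<in> carrier_mat d d" and B: "B \<in> carrier_mat d n"
  shows "obsv_mat (transpose_mat A) (transpose_mat B) = transpose_mat (ctrb_mat A B)"
proof -
  have "ctrb_mat (transpose_mat (transpose_mat A)) (transpose_mat (transpose_mat B)) =
     transpose_mat (obsv_mat (transpose_mat A) (transpose_mat B))"
    by (rule ctrb_transpose) (use A B in auto)
  then have "ctrb_mat A B = transpose_mat (obsv_mat (transpose_mat A) (transpose_mat B))" by simp
  then show ?thesis by (metis transpose_transpose)
qed

lemma controllable_transpose:
  fixes A C :: "complex mat"
  assumes A: "A \<in> carrier_mat d d" and C: "C \<in> carrier_mat n d"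
  shows "controllable (transpose_mat A) (transpose_mat C) \<longleftrightarrow> observable A C"
  unfolding controllable_def observable_def ctrb_transpose[OF A C] using A by simp

lemma observable_transpose:
  fixes A B :: "complex mat"
  assumes A: "A \<in> carrier_mat d d" and B: "B \<in> carrier_mat d n"
  shows "observable (transpose_mat A) (transpose_mat B) \<longleftrightarrow> controllable A B"
  unfolding controllable_def observable_def obsv_transpose[OF A B] using A by simp

lemma minv_transpose:
  fixes M :: "complex mat"
  assumes M: "M \<in> carrier_mat d d" and dM: "det M \<noteq> 0"
  shows "minv (transpose_mat M) = transpose_mat (minv M)"
proof -
  note p = minv_props[OF M dM]
  have "transpose_mat M * transpose_mat (minv M) = transpose_mat (minv M * M)"
    using transpose_mult[OF p(1) M] by simp
  also have "\<dots> = 1\<^sub>m d" using p(3) by simp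
  finally show ?thesis using minv_unique(1)[of "transpose_mat M" d "transpose_mat (minv M)"] M p(1) by simp
qed

lemma eventually_det:
  fixes A :: "complex mat"
  assumes A: "A \<in> carrier_mat d d"
  shows "\<forall>\<^sub>F s in cofinite. det (s \<cdot>\<^sub>m 1\<^sub>m d - A) \<noteq> 0"
  unfolding eventually_cofinite using det_char_finite[OF A] by simp

lemma realization_transpose:
  fixes A B C :: "complex mat"
  assumes R: "is_realization n G d A B C" and sym: "\<forall>\<^sub>F s in cofinite. G s = transpose_mat (G s)"
  shows "is_realization n G d (transpose_mat A) (transpose_mat C) (transpose_mat B)"
proof -
  from R have A: "A \<in> carrier_mat d d" and B: "B \<in> carrier_mat d n" and C: "C \<in> carrier_mat n d"
    and G: "\<forall>\<^sub>F s in cofinite. G s = C * minv (s \<cdot>\<^sub>m 1\<^sub>m d - A) * B"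
    unfolding is_realization_def by auto
  have "\<forall>\<^sub>F s in cofinite. G s = transpose_mat B * minv (s \<cdot>\<^sub>m 1\<^sub>m d - transpose_mat A) * transpose_mat C"
    using G sym eventually_det[OF A]
  proof eventually_elim
    case (elim s)
    have M: "s \<cdot>\<^sub>m 1\<^sub>m d - A \<in> carrier_mat d d" using A by (intro minus_carrier_mat) auto
    note p = minv_props[OF M elim(3)]
    have tM: "transpose_mat (s \<cdot>\<^sub>m 1\<^sub>m d - A) = s \<cdot>\<^sub>m 1\<^sub>m d - transpose_mat A"
      using A by (intro eq_matI) auto
    have "G s = transpose_mat (C * minv (s \<cdot>\<^sub>m 1\<^sub>m d - A) * B)" using elim(1,2) by simp
    also have "\<dots> = transpose_mat B * transpose_mat (C * minv (s \<cdot>\<^sub>m 1\<^sub>m d - A))"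
      using transpose_mult[OF mult_carrier_mat[OF C p(1)] B] .
    also have "transpose_mat (C * minv (s \<cdot>\<^sub>m 1\<^sub>m d - A)) = transpose_mat (minv (s \<cdot>\<^sub>m 1\<^sub>m d - A)) * transpose_mat C"
      using transpose_mult[OF C p(1)] .
    also have "transpose_mat (minv (s \<cdot>\<^sub>m 1\<^sub>m d - A)) = minv (s \<cdot>\<^sub>m 1\<^sub>m d - transpose_mat A)"
      using minv_transpose[OF M elim(3)] tM by simp
    finally have "G s = transpose_mat B * (minv (s \<cdot>\<^sub>m 1\<^sub>m d - transpose_mat A) * transpose_mat C)" .
    also have "\<dots> = transpose_mat B * minv (s \<cdot>\<^sub>m 1\<^sub>m d - transpose_mat A) * transpose_mat C"
      using assoc_mult_mat[of "transpose_mat B" n d "minv (s \<cdot>\<^sub>m 1\<^sub>m d - transpose_mat A)" d "transpose_mat C" n]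
        B C p(1) minv_transpose[OF M elim(3)] tM by simp
    finally show ?case .
  qed
  then show ?thesis unfolding is_realization_def using A B C by simp
qed


lemma realization_sim:
  fixes A B C R P :: "complex mat"
  assumes Re: "is_realization n G d A B C" and R: "R \<in> carrier_mat d d" and P: "P \<in> carrier_mat d d"
    and RP: "R * P = 1\<^sub>m d" and PR: "P * R = 1\<^sub>m d"
  shows "is_realization n G d (R * A * P) (R * B) (C * P)"
proof -
  from Re have A: "A \<in> carrier_mat d d" and B: "B \<in> carrier_mat d n" and C: "C \<in> carrier_mat n d"
    and G: "\<forall>\<^sub>F s in cofinite. G s = C * minv (s \<cdot>\<^sub>m 1\<^sub>m d - A) * B"
    unfolding is_realization_def by auto
  note [simp] = A B C R P
  note sq = assoc_mult_mat[of _ d d _ d _ d] assoc_mult_mat[of _ n d _ d _ d] assoc_mult_mat[of _ d d _ d _ n]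
    assoc_mult_mat[of _ n d _ d _ n]
    mult_carrier_mat[of _ d d _ d] mult_carrier_mat[of _ n d _ d] mult_carrier_mat[of _ d d _ n]
    left_mult_one_mat[of _ d d] right_mult_one_mat[of _ d d] left_mult_one_mat[of _ d n] right_mult_one_mat[of _ n d]
  have PRY0: "P * (R * Y) = Y" if "Y \<in> carrier_mat d k" for Y k
    using that PR assoc_mult_mat[OF P R that] by simp
  have PRY: "P * (R * Y) = Y" if "Y \<in> carrier_mat d d" for Y using PRY0[OF that] .
  have PRY': "P * (R * Y) = Y" if "Y \<in> carrier_mat d n" for Y using PRY0[OF that] .
  have "\<forall>\<^sub>F s in cofinite. G s = C * P * minv (s \<cdot>\<^sub>m 1\<^sub>m d - R * A * P) * (R * B)"
    using G eventually_det[OF A]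
  proof eventually_elim
    case (elim s)
    have M: "s \<cdot>\<^sub>m 1\<^sub>m d - A \<in> carrier_mat d d" using A by (intro minus_carrier_mat) auto
    note p = minv_props[OF M elim(2)]
    define X where "X = minv (s \<cdot>\<^sub>m 1\<^sub>m d - A)"
    have X[simp]: "X \<in> carrier_mat d d" using p(1) unfolding X_def .
    have MXY: "(s \<cdot>\<^sub>m 1\<^sub>m d - A) * (X * Y) = Y" if "Y \<in> carrier_mat d d" for Y
      using that p(2) assoc_mult_mat[OF M X that] unfolding X_def by simp
    have Meq: "s \<cdot>\<^sub>m 1\<^sub>m d - R * A * P = R * (s \<cdot>\<^sub>m 1\<^sub>m d - A) * P"
    proof -
      have "R * (s \<cdot>\<^sub>m 1\<^sub>m d - A) = R * (s \<cdot>\<^sub>m 1\<^sub>m d) - R * A"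
        by (rule mult_minus_distrib_mat[OF R _ A]) simp
      also have "R * (s \<cdot>\<^sub>m 1\<^sub>m d) = s \<cdot>\<^sub>m R"
        using mult_smult_distrib[OF R one_carrier_mat, of s] right_mult_one_mat[OF R] by simp
      finally have e1: "R * (s \<cdot>\<^sub>m 1\<^sub>m d - A) = s \<cdot>\<^sub>m R - R * A" .
      have "(s \<cdot>\<^sub>m R - R * A) * P = (s \<cdot>\<^sub>m R) * P - R * A * P"
        by (rule minus_mult_distrib_mat[of _ d d _ P d]) (simp_all add: sq)
      also have "(s \<cdot>\<^sub>m R) * P = s \<cdot>\<^sub>m 1\<^sub>m d" using mult_smult_assoc_mat[OF R P, of s] RP by simp
      finally show ?thesis using e1 by simp
    qed
    have M': "s \<cdot>\<^sub>m 1\<^sub>m d - R * A * P \<in> carrier_mat d d" by (intro minus_carrier_mat) (auto simp: sq)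
    have "(s \<cdot>\<^sub>m 1\<^sub>m d - R * A * P) * (R * X * P) = 1\<^sub>m d"
      unfolding Meq using PRY MXY RP M by (simp add: sq)
    then have mi: "minv (s \<cdot>\<^sub>m 1\<^sub>m d - R * A * P) = R * X * P"
      using minv_unique(1)[OF M' _ ] by (simp add: sq)
    show ?case unfolding mi using elim(1) PRY PRY' unfolding X_def[symmetric] by (simp add: sq)
  qed
  then show ?thesis unfolding is_realization_def by (simp add: sq)
qed


lemma sym_exists:
  fixes A B C :: "complex mat"
  assumes Re: "is_realization n G d A B C" and co: "controllable A B" and ob: "observable A C"
    and sym: "\<forall>\<^sub>F s in cofinite. G s = transpose_mat (G s)"
  shows "\<exists>A' B' C'. A' = transpose_mat A' \<and> C' = transpose_mat B' \<and>
            is_realization n G d A' B' C' \<and> controllable A' B' \<and> observable A' C'"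
proof -
  from Re have A: "A \<in> carrier_mat d d" and B: "B \<in> carrier_mat d n" and C: "C \<in> carrier_mat n d"
    unfolding is_realization_def by auto
  have At: "transpose_mat A \<in> carrier_mat d d" and Bt: "transpose_mat B \<in> carrier_mat n d"
    and Ct: "transpose_mat C \<in> carrier_mat d n" using A B C by auto
  note Rt = realization_transpose[OF Re sym]
  have cot: "controllable (transpose_mat A) (transpose_mat C)" using controllable_transpose[OF A C] ob by simp
  have obt: "observable (transpose_mat A) (transpose_mat B)" using observable_transpose[OF A B] co by simp
  obtain T U where T: "T \<in> carrier_mat d d" and U: "U \<in> carrier_mat d d" and TU: "T * U = 1\<^sub>m d"
    and UT: "U * T = 1\<^sub>m d" and AT: "transpose_mat A = T * A * U" and BT: "transpose_mat C = T * B"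
    and CT: "transpose_mat B = C * U"
    using realization_similar[OF Re Rt co ob cot obt] by blast
  have Tt: "transpose_mat T \<in> carrier_mat d d" and Ut: "transpose_mat U \<in> carrier_mat d d" using T U by auto
  note [simp] = A B C T U Tt Ut At Bt Ct
  note sq = assoc_mult_mat[of _ d d _ d _ d] assoc_mult_mat[of _ n d _ d _ d] assoc_mult_mat[of _ d d _ d _ n]
    assoc_mult_mat[of _ n d _ d _ n]
    mult_carrier_mat[of _ d d _ d] mult_carrier_mat[of _ n d _ d] mult_carrier_mat[of _ d d _ n]
    left_mult_one_mat[of _ d d] right_mult_one_mat[of _ d d] left_mult_one_mat[of _ d n] right_mult_one_mat[of _ n d]
  have c1: "T * A = transpose_mat A * T" unfolding AT using UT by (simp add: sq)
  have b1: "T * B = transpose_mat C" using BT by simp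
  have TtUt: "transpose_mat T * transpose_mat U = 1\<^sub>m d"
    using transpose_mult[OF U T] UT by simp
  have TtUtY: "transpose_mat T * (transpose_mat U * Y) = Y" if "Y \<in> carrier_mat d k" for Y k
    using assoc_mult_mat[OF Tt Ut that] TtUt that by simp
  have Aeq: "A = transpose_mat U * (transpose_mat A * transpose_mat T)"
  proof -
    have "A = transpose_mat (transpose_mat A)" by simp
    also have "\<dots> = transpose_mat (T * A * U)" unfolding AT ..
    also have "\<dots> = transpose_mat U * transpose_mat (T * A)" using transpose_mult[OF mult_carrier_mat[OF T A] U] .
    also have "transpose_mat (T * A) = transpose_mat A * transpose_mat T" using transpose_mult[OF T A] .
    finally show ?thesis .
  qed
  have c2: "transpose_mat T * A = transpose_mat A * transpose_mat T"
    using TtUtY[of "transpose_mat A * transpose_mat T" d] Aeq by (simp add: sq)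
  have Beq: "B = transpose_mat U * transpose_mat C"
  proof -
    have "B = transpose_mat (transpose_mat B)" by simp
    also have "\<dots> = transpose_mat (C * U)" unfolding CT ..
    also have "\<dots> = transpose_mat U * transpose_mat C" using transpose_mult[OF C U] .
    finally show ?thesis .
  qed
  have b2: "transpose_mat T * B = transpose_mat C"
    using TtUtY[of "transpose_mat C" n] Beq by simp
  have TT: "T = transpose_mat T"
    using sim_unique[OF A At B Ct co T c1 b1 Tt c2 b2] .
  have dT: "det T \<noteq> 0" using minv_unique(2)[OF T U TU] .
  obtain R P where R: "R \<in> carrier_mat d d" and P: "P \<in> carrier_mat d d" and RP: "R * P = 1\<^sub>m d"
    and PR: "P * R = 1\<^sub>m d" and RtR: "transpose_mat R * R = T"
    using sym_factor[OF T TT[symmetric] dT] by blast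
  have Rt: "transpose_mat R \<in> carrier_mat d d" and Pt: "transpose_mat P \<in> carrier_mat d d" using R P by auto
  note [simp] = R P Rt Pt
  have PtRt: "transpose_mat P * transpose_mat R = 1\<^sub>m d" using transpose_mult[OF R P] RP by simp
  have PtRtY: "transpose_mat P * (transpose_mat R * Y) = Y" if "Y \<in> carrier_mat d k" for Y k
    using assoc_mult_mat[OF Pt Rt that] PtRt that by simp
  have RPY: "R * (P * Y) = Y" if "Y \<in> carrier_mat d k" for Y k
    using assoc_mult_mat[OF R P that] RP that by simp
  have UPP: "U = P * transpose_mat P"
  proof -
    have "T * (P * transpose_mat P) = transpose_mat R * (R * (P * transpose_mat P))"
      unfolding RtR[symmetric] by (simp add: sq)
    also have "\<dots> = 1\<^sub>m d" using RPY[of "transpose_mat P" d] transpose_mult[OF P R] PR by simp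
    finally have "T * (P * transpose_mat P) = 1\<^sub>m d" .
    then have "minv T = P * transpose_mat P" using minv_unique(1)[OF T] by (simp add: sq)
    moreover have "minv T = U" using minv_unique(1)[OF T U TU] .
    ultimately show ?thesis by simp
  qed
  define A' where "A' = R * A * P"
  define B' where "B' = R * B"
  define C' where "C' = C * P"
  have A': "A' \<in> carrier_mat d d" unfolding A'_def by (simp add: sq)
  have B': "B' \<in> carrier_mat d n" unfolding B'_def by (simp add: sq)
  have C': "C' \<in> carrier_mat n d" unfolding C'_def by (simp add: sq)
  have symA: "A' = transpose_mat A'"
  proof -
    have "transpose_mat A' = transpose_mat P * transpose_mat (R * A)"
      unfolding A'_def using transpose_mult[OF mult_carrier_mat[OF R A] P] .
    also have "transpose_mat (R * A) = transpose_mat A * transpose_mat R" using transpose_mult[OF R A] .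
    also have "transpose_mat P * (transpose_mat A * transpose_mat R) =
        transpose_mat P * (transpose_mat R * (R * (A * (P * (transpose_mat P * transpose_mat R)))))"
      unfolding AT UPP RtR[symmetric] by (simp add: sq)
    also have "\<dots> = R * A * P" using PtRtY[of "R * (A * (P * (transpose_mat P * transpose_mat R)))" d] PtRt
      by (simp add: sq)
    finally show ?thesis unfolding A'_def by simp
  qed
  have symC: "C' = transpose_mat B'"
  proof -
    have "transpose_mat B' = transpose_mat B * transpose_mat R" unfolding B'_def using transpose_mult[OF R B] .
    also have "\<dots> = C * (P * (transpose_mat P * transpose_mat R))" unfolding CT UPP by (simp add: sq)
    also have "\<dots> = C * P" using PtRt by (simp add: sq)
    finally show ?thesis unfolding C'_def by simp
  qed
  have Re': "is_realization n G d A' B' C'" unfolding A'_def B'_def C'_def using realization_sim[OF Re R P RP PR] .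
  have cR: "R * A = A' * R" unfolding A'_def using PR by (simp add: sq)
  have bR: "R * B = B'" unfolding B'_def ..
  have K': "ctrb_mat A' B' = R * ctrb_mat A B" using sim_ctrb[OF R A A' B B' cR bR] by simp
  obtain Ki where Ki: "Ki \<in> carrier_mat (d * n) d" and eK: "ctrb_mat A B * Ki = 1\<^sub>m d"
    using right_inv_ctrb[OF A B co] by blast
  note KC = ctrb_carrier[OF A B]
  have "ctrb_mat A' B' * (Ki * P) = 1\<^sub>m d"
  proof -
    have "ctrb_mat A' B' * (Ki * P) = R * (ctrb_mat A B * (Ki * P))"
      unfolding K' using assoc_mult_mat[OF R KC mult_carrier_mat[OF Ki P]] .
    also have "ctrb_mat A B * (Ki * P) = (ctrb_mat A B * Ki) * P" using assoc_mult_mat[OF KC Ki P] by simp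
    finally show ?thesis using eK RP left_mult_one_mat[OF P] by simp
  qed
  then have "vec_space.rank d (ctrb_mat A' B') = d"
    using right_inv_rank[OF ctrb_carrier[OF A' B'] mult_carrier_mat[OF Ki P]] by simp
  then have co': "controllable A' B'" unfolding controllable_def using A' by simp
  have ob': "observable A' C'"
    using controllable_transpose[OF A' C'] co' symA symC by simp
  show ?thesis using symA symC Re' co' ob' by blast
qed

lemma sym_unique:
  fixes A1 B1 C1 A2 B2 C2 :: "complex mat"
  assumes R1: "is_realization n G d A1 B1 C1" and co1: "controllable A1 B1" and ob1: "observable A1 C1"
    and sA1: "A1 = transpose_mat A1" and sC1: "C1 = transpose_mat B1"
    and R2: "is_realization n G d A2 B2 C2" and co2: "controllable A2 B2" and ob2: "observable A2 C2"
    and sA2: "A2 = transpose_mat A2" and sC2: "C2 = transpose_mat B2"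
  shows "\<exists>!S. S \<in> orth_group d \<and> A2 = S * A1 * minv S \<and> B2 = S * B1 \<and> C2 = C1 * minv S"
proof -
  from R1 have A1: "A1 \<in> carrier_mat d d" and B1: "B1 \<in> carrier_mat d n" and C1: "C1 \<in> carrier_mat n d"
    unfolding is_realization_def by auto
  from R2 have A2: "A2 \<in> carrier_mat d d" and B2: "B2 \<in> carrier_mat d n" and C2: "C2 \<in> carrier_mat n d"
    unfolding is_realization_def by auto
  obtain T U where T: "T \<in> carrier_mat d d" and U: "U \<in> carrier_mat d d" and TU: "T * U = 1\<^sub>m d"
    and UT: "U * T = 1\<^sub>m d" and AT: "A2 = T * A1 * U" and BT: "B2 = T * B1" and CT: "C2 = C1 * U"
    using realization_similar[OF R1 R2 co1 ob1 co2 ob2] by blast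
  have Tt: "transpose_mat T \<in> carrier_mat d d" and Ut: "transpose_mat U \<in> carrier_mat d d" using T U by auto
  note [simp] = A1 B1 C1 A2 B2 C2 T U Tt Ut
  note sq = assoc_mult_mat[of _ d d _ d _ d] assoc_mult_mat[of _ n d _ d _ d] assoc_mult_mat[of _ d d _ d _ n]
    assoc_mult_mat[of _ n d _ d _ n]
    mult_carrier_mat[of _ d d _ d] mult_carrier_mat[of _ n d _ d] mult_carrier_mat[of _ d d _ n]
    left_mult_one_mat[of _ d d] right_mult_one_mat[of _ d d] left_mult_one_mat[of _ d n] right_mult_one_mat[of _ n d]
  have c1: "T * A1 = A2 * T" unfolding AT using UT by (simp add: sq)
  have TtUt: "transpose_mat T * transpose_mat U = 1\<^sub>m d"
    using transpose_mult[OF U T] UT by simp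
  have A2eq: "A2 = transpose_mat U * (A1 * transpose_mat T)"
  proof -
    have "A2 = transpose_mat (T * A1 * U)" using sA2 AT by simp
    also have "\<dots> = transpose_mat U * transpose_mat (T * A1)" using transpose_mult[OF mult_carrier_mat[OF T A1] U] .
    also have "transpose_mat (T * A1) = transpose_mat A1 * transpose_mat T" using transpose_mult[OF T A1] .
    finally show ?thesis using sA1 by simp
  qed
  have c2: "transpose_mat U * A1 = A2 * transpose_mat U"
    unfolding A2eq using TtUt by (simp add: sq)
  have b2: "transpose_mat U * B1 = B2"
  proof -
    have "B2 = transpose_mat C2" using sC2 by simp
    also have "\<dots> = transpose_mat U * transpose_mat C1" unfolding CT using transpose_mult[OF C1 U] .
    also have "transpose_mat C1 = B1" using sC1 by simp
    finally show ?thesis by simp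
  qed
  have TUt: "T = transpose_mat U"
    using sim_unique[OF A1 A2 B1 B2 co1 T c1 BT[symmetric] Ut c2 b2] .
  have orth: "T \<in> orth_group d" unfolding orth_group_def using T TU TUt by simp
  have mT: "minv T = U" using minv_unique(1)[OF T U TU] .
  show ?thesis
  proof (rule ex1I[of _ T])
    show "T \<in> orth_group d \<and> A2 = T * A1 * minv T \<and> B2 = T * B1 \<and> C2 = C1 * minv T"
      using orth AT BT CT mT by simp
  next
    fix S assume S: "S \<in> orth_group d \<and> A2 = S * A1 * minv S \<and> B2 = S * B1 \<and> C2 = C1 * minv S"
    then have Sc: "S \<in> carrier_mat d d" and SSt: "S * transpose_mat S = 1\<^sub>m d"
      unfolding orth_group_def by auto
    have St: "transpose_mat S \<in> carrier_mat d d" using Sc by simp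
    have mS: "minv S = transpose_mat S" using minv_unique(1)[OF Sc St SSt] .
    have StS: "transpose_mat S * S = 1\<^sub>m d" using mat_mult_left_right_inverse[OF Sc St SSt] .
    note [simp] = Sc St
    have cS: "S * A1 = A2 * S" using S StS unfolding mS by (simp add: sq)
    have bS: "S * B1 = B2" using S by simp
    show "S = T" using sim_unique[OF A1 A2 B1 B2 co1 Sc cS bS T c1 BT[symmetric]] .
  qed
qed

theorem mainTheorem1:
  fixes n \<delta> :: nat and G :: "complex \<Rightarrow> complex mat"
  assumes "strictly_proper_rational n G"
    and "mcmillan_degree n G \<delta>"
    and "\<forall>\<^sub>F s in cofinite. G s = transpose_mat (G s)"
  shows "(\<exists>A B C. A = transpose_mat A \<and> C = transpose_mat B \<and>
            is_realization n G \<delta> A B C \<and> controllable A B \<and> observable A C)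
       \<and> (\<forall>A1 B1 C1 A2 B2 C2.
            is_realization n G \<delta> A1 B1 C1 \<and> controllable A1 B1 \<and> observable A1 C1 \<and>
            A1 = transpose_mat A1 \<and> C1 = transpose_mat B1 \<and>
            is_realization n G \<delta> A2 B2 C2 \<and> controllable A2 B2 \<and> observable A2 C2 \<and>
            A2 = transpose_mat A2 \<and> C2 = transpose_mat B2
            \<longrightarrow> (\<exists>!S. S \<in> orth_group \<delta> \<and>
                   A2 = S * A1 * minv S \<and> B2 = S * B1 \<and> C2 = C1 * minv S))"
proof
  from assms(2) obtain A B C where Re: "is_realization n G \<delta> A B C" and co: "controllable A B"
    and ob: "observable A C" unfolding mcmillan_degree_def by blast
  show "\<exists>A B C. A = transpose_mat A \<and> C = transpose_mat B \<and>
            is_realization n G \<delta> A B C \<and> controllable A B \<and> observable A C"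
    using sym_exists[OF Re co ob assms(3)] .
next
  show "\<forall>A1 B1 C1 A2 B2 C2.
            is_realization n G \<delta> A1 B1 C1 \<and> controllable A1 B1 \<and> observable A1 C1 \<and>
            A1 = transpose_mat A1 \<and> C1 = transpose_mat B1 \<and>
            is_realization n G \<delta> A2 B2 C2 \<and> controllable A2 B2 \<and> observable A2 C2 \<and>
            A2 = transpose_mat A2 \<and> C2 = transpose_mat B2
            \<longrightarrow> (\<exists>!S. S \<in> orth_group \<delta> \<and>
                   A2 = S * A1 * minv S \<and> B2 = S * B1 \<and> C2 = C1 * minv S)"
    using sym_unique by blast
qed


end
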